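(* Let $n_1,n_2,n_3,r$ be positive integers with $r\le\min(n_1,n_2)$, and let $$\mathscr{S}_r=\{\mathcal{X}\in\mathbb{R}^{n_1\times n_2\times n_3}:\ \mathrm{rank}_t(\mathcal{X})\le r,\ \|\mathcal{X}\|_F=1\}.$$ Then for every $0<\epsilon<1$ the covering number of $\mathscr{S}_r$ with respect to the Frobenius norm satisfies $$\mathscr{N}(\mathscr{S}_r,\|\cdot\|_F,\epsilon)\le (9/\epsilon)^{\,r\cdot r\cdot n_3+n_1\cdot r\cdot n_3+n_2\cdot r\cdot n_3}.$$
   Context: The tensor tubal rank $\mathrm{rank}_t(\mathcal{X})$ of $\mathcal{X}\in\mathbb{R}^{n_1\times n_2\times n_3}$ is the number of nonzero singular tubes $\mathcal{S}(i,i,:)$ in the central f-diagonal factor $\mathcal{S}$ of the t-SVD $\mathcal{X}=\mathcal{U}*\mathcal{S}*\mathcal{V}^*$ (t-product, t-SVD: $\mathcal{X}$ is factored via SVDs of its frontal slices after a DFT along the third mode; equivalently $\mathrm{rank}_t(\mathcal{X})$ is the maximum over $k$ of the rank of the $k$-th frontal slice of the DFT of $\mathcal{X}$ along the third dimension). For a subset $\mathscr{X}$ of a normed space, an $\epsilon$-net is a subset $N\subset\mathscr{X}$ such that every point of $\mathscr{X}$ is within distance $\epsilon$ of some point of $N$; the covering number $\mathscr{N}(\mathscr{X},\|\cdot\|,\epsilon)$ is the minimal cardinality of an $\epsilon$-net. *)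

theory Defs
  imports "HOL-Analysis.Analysis" "Jordan_Normal_Form.DL_Rank"
begin

text \<open>A real third-order tensor of size n1 x n2 x n3 is represented as a function
  nat => nat => nat => real (0-based indices) that vanishes outside the index box.\<close>

type_synonym tensor3 = "nat \<Rightarrow> nat \<Rightarrow> nat \<Rightarrow> real"

definition tensors :: "nat \<Rightarrow> nat \<Rightarrow> nat \<Rightarrow> tensor3 set" where
  "tensors n1 n2 n3 = {X. \<forall>i j k. (n1 \<le> i \<or> n2 \<le> j \<or> n3 \<le> k) \<longrightarrow> X i j k = 0}"

definition frob_norm :: "nat \<Rightarrow> nat \<Rightarrow> nat \<Rightarrow> tensor3 \<Rightarrow> real" where
  "frob_norm n1 n2 n3 X = sqrt (\<Sum>i<n1. \<Sum>j<n2. \<Sum>k<n3. (X i j k)\<^sup>2)"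

definition frob_dist :: "nat \<Rightarrow> nat \<Rightarrow> nat \<Rightarrow> tensor3 \<Rightarrow> tensor3 \<Rightarrow> real" where
  "frob_dist n1 n2 n3 X Y = frob_norm n1 n2 n3 (\<lambda>i j k. X i j k - Y i j k)"

definition dft_slice :: "nat \<Rightarrow> nat \<Rightarrow> nat \<Rightarrow> tensor3 \<Rightarrow> nat \<Rightarrow> complex mat" where
  "dft_slice n1 n2 n3 X k = mat n1 n2 (\<lambda>(i, j).
     \<Sum>l<n3. complex_of_real (X i j l) *
       cis (- 2 * pi * real k * real l / real n3))"

definition tubal_rank :: "nat \<Rightarrow> nat \<Rightarrow> nat \<Rightarrow> tensor3 \<Rightarrow> nat" where
  "tubal_rank n1 n2 n3 X = Max ((\<lambda>k. vec_space.rank n1 (dft_slice n1 n2 n3 X k)) ` {..<n3})"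

definition eps_net :: "('a \<Rightarrow> 'a \<Rightarrow> real) \<Rightarrow> 'a set \<Rightarrow> real \<Rightarrow> 'a set \<Rightarrow> bool" where
  "eps_net d S \<epsilon> N \<longleftrightarrow> N \<subseteq> S \<and> (\<forall>x\<in>S. \<exists>y\<in>N. d x y \<le> \<epsilon>)"

definition covering_number :: "('a \<Rightarrow> 'a \<Rightarrow> real) \<Rightarrow> 'a set \<Rightarrow> real \<Rightarrow> ereal" where
  "covering_number d S \<epsilon> = (INF N \<in> {N. finite N \<and> eps_net d S \<epsilon> N}. ereal (real (card N)))"

definition low_tubal_sphere :: "nat \<Rightarrow> nat \<Rightarrow> nat \<Rightarrow> nat \<Rightarrow> tensor3 set" where
  "low_tubal_sphere n1 n2 n3 r =
     {X \<in> tensors n1 n2 n3. tubal_rank n1 n2 n3 X \<le> r \<and> frob_norm n1 n2 n3 X = 1}"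

end

theory Submission
  imports Defs
begin

lemma cis_eq_1_iff_int: "cis b = 1 \<longleftrightarrow> (\<exists>m::int. b = 2 * pi * of_int m)"
  unfolding cis_conv_exp exp_eq_1 by (auto simp: algebra_simps)

lemma sum_cis_roots:
  assumes n: "0 < n" 
  shows "(\<Sum>k<n. cis (2 * pi * real k * of_int d / real n)) = (if int n dvd d then of_nat n else 0)"
proof -
  define z where "z = cis (2 * pi * of_int d / real n)"
  have zk: "cis (2 * pi * real k * of_int d / real n) = z ^ k" for k
    unfolding z_def Complex.DeMoivre by (simp add: field_simps)
  have zn0: "z ^ n = cis (2 * pi * of_int d)"
    unfolding z_def Complex.DeMoivre using n by (simp add: field_simps)
  have zn: "z ^ n = 1"
    unfolding zn0 by (rule cis_multiple_2pi) simp
  show ?thesis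
  proof (cases "int n dvd d")
    case True
    then obtain m where "d = int n * m" by (auto simp: dvd_def)
    then have "z = 1" unfolding z_def using n
      by (simp add: cis_eq_1_iff_int)
    then show ?thesis using True by (simp add: zk)
  next
    case False
    have "z \<noteq> 1"
    proof
      assume "z = 1"
      then obtain m where m: "2 * pi * of_int d / real n = 2 * pi * of_int m"
        unfolding z_def cis_eq_1_iff_int by blast
      then have "of_int d = real n * of_int m" using n by (simp add: field_simps)
      then have "d = int n * m" by (metis of_int_eq_iff of_int_mult of_int_of_nat_eq)
      then show False using False by simp
    qed
    then have "(\<Sum>k<n. z ^ k) = 0" using zn by (simp add: sum_gp_strict)
    then show ?thesis using False by (simp add: zk)
  qed
qed

definition cdft :: "nat \<Rightarrow> (nat \<Rightarrow> complex) \<Rightarrow> nat \<Rightarrow> complex" where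
  "cdft n x k = (\<Sum>l<n. x l * cis (- 2 * pi * real k * real l / real n))"

definition icdft :: "nat \<Rightarrow> (nat \<Rightarrow> complex) \<Rightarrow> nat \<Rightarrow> complex" where
  "icdft n G l = (\<Sum>k<n. G k * cis (2 * pi * real k * real l / real n)) / of_nat n"

lemma cis_shift_int: "cis (a + 2 * pi * of_int m) = cis a"
  by (metis Ints_of_int cis_mult cis_multiple_2pi mult_1_right)

lemma sum_cis_nat:
  assumes n: "0 < n" and "l < n" "l' < n"
  shows "(\<Sum>k<n. cis (2 * pi * real k * (real l - real l') / real n)) = (if l = l' then of_nat n else 0)"
proof -
  have "(\<Sum>k<n. cis (2 * pi * real k * (real l - real l') / real n))
      = (\<Sum>k<n. cis (2 * pi * real k * of_int (int l - int l') / real n))" by simp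
  also have "\<dots> = (if int n dvd (int l - int l') then of_nat n else 0)" by (rule sum_cis_roots[OF n])
  also have "(int n dvd (int l - int l')) = (l = l')"
  proof
    assume "int n dvd (int l - int l')"
    then obtain m where m: "int l - int l' = int n * m" by (auto simp: dvd_def)
    have "\<bar>int n * m\<bar> < int n" using assms m by linarith
    then have "m = 0" using n by (auto simp: abs_mult)
    then show "l = l'" using m by simp
  qed simp
  finally show ?thesis .
qed

lemma cis_prod_cnj: "cis (- 2 * pi * real k * real l / real n) * cnj (cis (- 2 * pi * real k * real l' / real n))
   = cis (2 * pi * real k * (real l' - real l) / real n)"
  unfolding cis_cnj cis_mult by (rule arg_cong[where f=cis]) (simp add: diff_divide_distrib right_diff_distrib)

lemma sum_swap3: "(\<Sum>k\<in>A. \<Sum>l\<in>B. \<Sum>m\<in>C. f k l m) = (\<Sum>l\<in>B. \<Sum>m\<in>C. \<Sum>k\<in>A. f k l m)"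
proof -
  have "(\<Sum>k\<in>A. \<Sum>l\<in>B. \<Sum>m\<in>C. f k l m) = (\<Sum>l\<in>B. \<Sum>k\<in>A. \<Sum>m\<in>C. f k l m)" by (rule sum.swap)
  also have "\<dots> = (\<Sum>l\<in>B. \<Sum>m\<in>C. \<Sum>k\<in>A. f k l m)" by (rule sum.cong[OF refl], rule sum.swap)
  finally show ?thesis .
qed

lemma parseval_tube:
  assumes n: "0 < n"
  shows "(\<Sum>k<n. (cmod (cdft n x k))\<^sup>2) = real n * (\<Sum>l<n. (cmod (x l))\<^sup>2)"
proof -
  have "complex_of_real (\<Sum>k<n. (cmod (cdft n x k))\<^sup>2) = (\<Sum>k<n. cdft n x k * cnj (cdft n x k))"
    unfolding of_real_sum by (intro sum.cong refl) (rule complex_norm_square)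
  also have "\<dots> = (\<Sum>k<n. \<Sum>l<n. \<Sum>l'<n. x l * cnj (x l') * cis (2 * pi * real k * (real l' - real l) / real n))"
  proof (intro sum.cong refl)
    fix k
    have "cdft n x k * cnj (cdft n x k) = (\<Sum>l<n. \<Sum>l'<n. (x l * cis (- 2 * pi * real k * real l / real n)) * cnj (x l' * cis (- 2 * pi * real k * real l' / real n)))"
      unfolding cdft_def cnj_sum sum_product ..
    also have "\<dots> = (\<Sum>l<n. \<Sum>l'<n. x l * cnj (x l') * cis (2 * pi * real k * (real l' - real l) / real n))"
      by (intro sum.cong refl) (subst cis_prod_cnj[symmetric], simp only: complex_cnj_mult mult.assoc mult.left_commute mult.commute)
    finally show "cdft n x k * cnj (cdft n x k) = \<dots>" .
  qed
  also have "\<dots> = (\<Sum>l<n. \<Sum>l'<n. x l * cnj (x l') * (\<Sum>k<n. cis (2 * pi * real k * (real l' - real l) / real n)))"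
    unfolding sum_distrib_left by (rule sum_swap3)
  also have "\<dots> = (\<Sum>l<n. \<Sum>l'<n. x l * cnj (x l') * (if l' = l then of_nat n else 0))"
    by (intro sum.cong refl) (simp add: sum_cis_nat[OF n])
  also have "\<dots> = (\<Sum>l<n. of_nat n * (x l * cnj (x l)))"
    by (intro sum.cong refl) (simp add: if_distrib sum.delta cong: if_cong)
  also have "\<dots> = (\<Sum>l<n. of_nat n * complex_of_real ((cmod (x l))\<^sup>2))"
    by (simp only: complex_norm_square)
  also have "\<dots> = complex_of_real (real n * (\<Sum>l<n. (cmod (x l))\<^sup>2))"
    by (simp only: of_real_mult of_real_sum sum_distrib_left of_real_of_nat_eq)
  finally show ?thesis by (simp only: of_real_eq_iff)
qed

lemma cis_comb2: "cis (2 * pi * real k' * real l / real n) * cis (- 2 * pi * real k * real l / real n)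
   = cis (2 * pi * real l * (real k' - real k) / real n)"
  unfolding cis_mult by (rule arg_cong[where f=cis]) (simp add: diff_divide_distrib right_diff_distrib mult_ac)

lemma dft_idft:
  assumes n: "0 < n" and k: "k < n"
  shows "cdft n (icdft n G) k = G k"
proof -
  have "cdft n (icdft n G) k = (\<Sum>l<n. \<Sum>k'<n. G k' * cis (2 * pi * real l * (real k' - real k) / real n)) / of_nat n"
    unfolding cdft_def icdft_def sum_divide_distrib sum_distrib_right
  proof (intro sum.cong refl)
    fix l k' 
    show "G k' * cis (2 * pi * real k' * real l / real n) / complex_of_nat n * cis (- 2 * pi * real k * real l / real n) =
         G k' * cis (2 * pi * real l * (real k' - real k) / real n) / complex_of_nat n"
      by (subst cis_comb2[symmetric]) simp
  qed
  also have "\<dots> = (\<Sum>k'<n. G k' * (\<Sum>l<n. cis (2 * pi * real l * (real k' - real k) / real n))) / of_nat n"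
    unfolding sum_distrib_left by (subst sum.swap) (rule refl)
  also have "\<dots> = (\<Sum>k'<n. G k' * (if k' = k then of_nat n else 0)) / of_nat n"
    using k by (intro arg_cong2[where f="(/)"] sum.cong refl) (simp add: sum_cis_nat[OF n])
  also have "\<dots> = G k" using n k by (simp add: if_distrib sum.delta cong: if_cong)
  finally show ?thesis .
qed

lemma cis_eqI: "x = y + 2 * pi * of_int m \<Longrightarrow> cis x = cis y"
  using cis_shift_int by simp

lemma negmod_inv: "0 < (n::nat) \<Longrightarrow> a < n \<Longrightarrow> (n - (n - a) mod n) mod n = a"
proof (cases "a = 0")
  case False
  assume "0 < n" "a < n"
  then have "(n - a) mod n = n - a" using False by simp
  then show ?thesis using \<open>a < n\<close> by simp
qed simp

lemma bij_negmod:
  assumes n: "0 < (n::nat)"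
  shows "bij_betw (\<lambda>k. (n - k) mod n) {..<n} {..<n}"
  by (rule bij_betw_byWitness[where f'="\<lambda>k. (n - k) mod n"]) (use n in \<open>auto simp: negmod_inv\<close>)

lemma icdft_real:
  assumes n: "0 < n" and sym: "\<And>k. k < n \<Longrightarrow> G ((n - k) mod n) = cnj (G k)"
  shows "cnj (icdft n G l) = icdft n G l"
proof -
  have "cnj (icdft n G l) = (\<Sum>k<n. G ((n - k) mod n) * cis (- (2 * pi * real k * real l / real n))) / of_nat n"
    unfolding icdft_def by (simp add: cis_cnj sym)
  also have "(\<Sum>k<n. G ((n - k) mod n) * cis (- (2 * pi * real k * real l / real n)))
     = (\<Sum>k<n. G ((n - k) mod n) * cis (2 * pi * real ((n - k) mod n) * real l / real n))"
  proof (intro sum.cong refl arg_cong2[where f="(*)"])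
    fix k assume k: "k \<in> {..<n}"
    show "cis (- (2 * pi * real k * real l / real n)) = cis (2 * pi * real ((n - k) mod n) * real l / real n)"
    proof (cases "k = 0")
      case True then show ?thesis by simp
    next
      case False
      then have "(n - k) mod n = n - k" using k by auto
      then show ?thesis
        by (intro cis_eqI[where m="- int l"]) (use k n in \<open>simp add: of_nat_diff field_simps\<close>)
    qed
  qed
  also have "\<dots> = (\<Sum>k<n. G k * cis (2 * pi * real k * real l / real n))"
    using sum.reindex_bij_betw[OF bij_negmod[OF n], of "\<lambda>k. G k * cis (2 * pi * real k * real l / real n)"] by simp
  finally show ?thesis unfolding icdft_def by simp
qed

definition conv :: "nat \<Rightarrow> (nat \<Rightarrow> complex) \<Rightarrow> (nat \<Rightarrow> complex) \<Rightarrow> nat \<Rightarrow> complex" where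
  "conv n a b m = (\<Sum>l<n. a l * b ((m + (n - l)) mod n))"

lemma cis_mod:
  assumes n: "0 < n"
  shows "cis (- 2 * pi * real k * real t / real n) = cis (- 2 * pi * real k * real (t mod n) / real n)"
proof -
  have "real t = real (t mod n) + real n * real (t div n)"
    by (metis of_nat_add of_nat_mult mod_div_mult_eq add.commute mult.commute)
  then show ?thesis
    by (intro cis_eqI[where m="- int (k * (t div n))"]) (use n in \<open>simp add: field_simps\<close>)
qed

lemma bij_shiftmod:
  assumes n: "0 < (n::nat)" and l: "l < n"
  shows "bij_betw (\<lambda>m. (m + (n - l)) mod n) {..<n} {..<n}"
proof (rule bij_betw_byWitness[where f'="\<lambda>m. (m + l) mod n"])
  show "\<forall>a'\<in>{..<n}. ((a' + l) mod n + (n - l)) mod n = a'"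
  proof
    fix a' assume a': "a' \<in> {..<n}"
    have "((a'+l) mod n + (n-l)) mod n = (a' + l + (n - l)) mod n" by (rule mod_add_left_eq)
    also have "a' + l + (n-l) = a' + n" using l by simp
    finally show "((a' + l) mod n + (n - l)) mod n = a'" using a' by simp
  qed
qed (use n l in \<open>auto simp: mod_add_left_eq\<close>)

lemma cis_add_nat: "cis (- 2 * pi * real k * real a / real n) * cis (- 2 * pi * real k * real b / real n)
   = cis (- 2 * pi * real k * real (a + b) / real n)"
  unfolding cis_mult of_nat_add by (rule arg_cong[where f=cis]) (simp add: diff_divide_distrib ring_distribs)

lemma cdft_conv:
  assumes n: "0 < n"
  shows "cdft n (conv n a b) k = cdft n a k * cdft n b k"
proof -
  let ?c = "\<lambda>t. cis (- 2 * pi * real k * real t / real n)"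
  have split: "?c m = ?c l * ?c ((m + (n - l)) mod n)" if "m < n" "l < n" for m l
  proof -
    have "?c ((m + (n - l)) mod n) = ?c (m + (n - l))" using cis_mod[OF n, of k "m + (n - l)"] by simp
    also have "?c l * \<dots> = ?c (l + (m + (n - l)))" by (rule cis_add_nat)
    also have "l + (m + (n - l)) = m + n" using that by simp
    also have "?c (m + n) = ?c m" using cis_mod[OF n, of k "m + n"] cis_mod[OF n, of k m] that by simp
    finally show ?thesis by simp
  qed
  have "cdft n (conv n a b) k = (\<Sum>l<n. \<Sum>m<n. a l * ?c l * (b ((m + (n - l)) mod n) * ?c ((m + (n - l)) mod n)))"
    unfolding cdft_def conv_def sum_distrib_right
  proof (subst sum.swap, intro sum.cong refl)
    fix l m assume "l \<in> {..<n}" "m \<in> {..<n}"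
    then show "a l * b ((m + (n - l)) mod n) * ?c m = a l * ?c l * (b ((m + (n - l)) mod n) * ?c ((m + (n - l)) mod n))"
      using split[of m l] by simp
  qed
  also have "\<dots> = (\<Sum>l<n. a l * ?c l * (\<Sum>m<n. b m * ?c m))"
    unfolding sum_distrib_left[symmetric]
  proof (rule sum.cong[OF refl])
    fix l assume "l \<in> {..<n}"
    then have "(\<Sum>m<n. b ((m + (n - l)) mod n) * ?c ((m + (n - l)) mod n)) = (\<Sum>m<n. b m * ?c m)"
      using sum.reindex_bij_betw[OF bij_shiftmod[OF n], of l "\<lambda>m. b m * ?c m"] by simp
    then show "a l * ?c l * (\<Sum>m<n. b ((m + (n - l)) mod n) * ?c ((m + (n - l)) mod n)) = a l * ?c l * (\<Sum>m<n. b m * ?c m)"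
      by simp
  qed
  also have "\<dots> = cdft n a k * cdft n b k" unfolding cdft_def by (simp add: sum_distrib_right)
  finally show ?thesis .
qed

type_synonym cvec = "nat \<Rightarrow> complex"

definition inn :: "nat \<Rightarrow> cvec \<Rightarrow> cvec \<Rightarrow> complex" where
  "inn d x y = (\<Sum>i<d. x i * cnj (y i))"

definition res :: "nat \<Rightarrow> (cvec \<times> cvec) list \<Rightarrow> cvec \<Rightarrow> cvec" where
  "res d P c = (\<lambda>i. c i - (\<Sum>q<length P. inn d c (snd (P!q)) * snd (P!q) i))"

definition nrm :: "nat \<Rightarrow> cvec \<Rightarrow> real" where
  "nrm d w = sqrt (\<Sum>i<d. (cmod (w i))\<^sup>2)"

definition nrml :: "nat \<Rightarrow> cvec \<Rightarrow> cvec" where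
  "nrml d w = (\<lambda>i. if i < d then w i / complex_of_real (nrm d w) else 0)"

definition isz :: "nat \<Rightarrow> cvec \<Rightarrow> bool" where
  "isz d w = (\<forall>i<d. w i = 0)"

fun gs :: "nat \<Rightarrow> cvec list \<Rightarrow> (cvec \<times> cvec) list \<Rightarrow> (cvec \<times> cvec) list" where
  "gs d [] P = P"
| "gs d (c # cs) P = (if isz d (res d P c) then gs d cs P else gs d cs (P @ [(c, nrml d (res d P c))]))"

definition ON :: "nat \<Rightarrow> (cvec \<times> cvec) list \<Rightarrow> bool" where
  "ON d P = (\<forall>p<length P. \<forall>q<length P. inn d (snd (P!p)) (snd (P!q)) = (if p = q then 1 else 0))"

definition SP :: "nat \<Rightarrow> (cvec \<times> cvec) list \<Rightarrow> cvec \<Rightarrow> bool" where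
  "SP d P c = (\<forall>i<d. c i = (\<Sum>q<length P. inn d c (snd (P!q)) * snd (P!q) i))"

definition TRI :: "nat \<Rightarrow> (cvec \<times> cvec) list \<Rightarrow> bool" where
  "TRI d P = ((\<forall>p<length P. \<forall>q<length P. p < q \<longrightarrow> inn d (fst (P!p)) (snd (P!q)) = 0)
     \<and> (\<forall>p<length P. inn d (fst (P!p)) (snd (P!p)) \<noteq> 0))"

definition Inv :: "nat \<Rightarrow> (cvec \<times> cvec) list \<Rightarrow> bool" where
  "Inv d P = (ON d P \<and> TRI d P \<and> (\<forall>p<length P. SP d P (fst (P!p))))"

lemma inn_cnj: "inn d y x = cnj (inn d x y)"
  unfolding inn_def by (simp add: mult.commute)

lemma inn_self: "inn d x x = complex_of_real ((nrm d x)\<^sup>2)"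
proof -
  have "(nrm d x)\<^sup>2 = (\<Sum>i<d. (cmod (x i))\<^sup>2)" unfolding nrm_def by (simp add: sum_nonneg)
  then have "complex_of_real ((nrm d x)\<^sup>2) = (\<Sum>i<d. complex_of_real ((cmod (x i))\<^sup>2))" by simp
  also have "\<dots> = inn d x x" unfolding inn_def by (simp only: complex_norm_square)
  finally show ?thesis by simp
qed

lemma SP_orth:
  assumes "SP d P c" "\<And>q. q < length P \<Longrightarrow> inn d (snd (P!q)) o' = 0"
  shows "inn d c o' = 0"
proof -
  define \<alpha> where "\<alpha> = (\<lambda>q. inn d c (snd (P!q)))"
  have ceq: "\<forall>i<d. c i = (\<Sum>q<length P. \<alpha> q * snd (P!q) i)" using assms(1) unfolding SP_def \<alpha>_def .
  have "inn d c o' = (\<Sum>i<d. (\<Sum>q<length P. \<alpha> q * snd (P!q) i) * cnj (o' i))"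
    unfolding inn_def using ceq by (intro sum.cong refl) simp
  also have "\<dots> = (\<Sum>q<length P. \<alpha> q * inn d (snd (P!q)) o')"
    unfolding inn_def sum_distrib_right sum_distrib_left by (subst sum.swap) (simp only: mult_ac)
  also have "\<dots> = 0" using assms(2) by simp
  finally show ?thesis .
qed

lemma SP_snoc:
  assumes "SP d P c" "inn d c (snd x) = 0"
  shows "SP d (P @ [x]) c"
  using assms unfolding SP_def by (simp add: nth_append)

lemma ON_delta: "ON d P \<Longrightarrow> q < length P \<Longrightarrow> (\<Sum>p<length P. f p * inn d (snd (P!p)) (snd (P!q))) = f q"
proof -
  assume on: "ON d P" and q: "q < length P"
  have "(\<Sum>p<length P. f p * inn d (snd (P!p)) (snd (P!q))) = (\<Sum>p<length P. f p * (if p = q then 1 else 0))"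
    using on q unfolding ON_def by (intro sum.cong refl) simp
  also have "\<dots> = f q" using q by (simp add: if_distrib sum.delta cong: if_cong)
  finally show ?thesis .
qed

lemma inn_res_old:
  assumes "ON d P" "q < length P"
  shows "inn d (res d P c) (snd (P!q)) = 0"
proof -
  define \<alpha> where "\<alpha> = (\<lambda>q. inn d c (snd (P!q)))"
  have r: "res d P c = (\<lambda>i. c i - (\<Sum>p<length P. \<alpha> p * snd (P!p) i))" unfolding res_def \<alpha>_def ..
  have "inn d (res d P c) (snd (P!q)) = (\<Sum>i<d. c i * cnj (snd (P!q) i)) - (\<Sum>i<d. \<Sum>p<length P. \<alpha> p * (snd (P!p) i * cnj (snd (P!q) i)))"
    unfolding r inn_def by (simp add: left_diff_distrib right_diff_distrib sum_subtractf sum_distrib_right sum_distrib_left mult_ac)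
  also have "(\<Sum>i<d. \<Sum>p<length P. \<alpha> p * (snd (P!p) i * cnj (snd (P!q) i)))
       = (\<Sum>p<length P. \<alpha> p * inn d (snd (P!p)) (snd (P!q)))"
    unfolding inn_def sum_distrib_left by (rule sum.swap)
  also have "\<dots> = \<alpha> q" by (rule ON_delta[OF assms])
  finally show ?thesis unfolding \<alpha>_def inn_def by simp
qed

lemma nrm_pos: "\<not> isz d w \<Longrightarrow> 0 < nrm d w"
  unfolding isz_def nrm_def
  by (auto intro!: sum_pos2[where i=i for i] simp: sum_nonneg)

lemma inn_nrml_left: "inn d (nrml d w) y = inn d w y / complex_of_real (nrm d w)"
  unfolding inn_def nrml_def by (simp add: sum_divide_distrib)

lemma inn_nrml_self:
  assumes "\<not> isz d w" shows "inn d (nrml d w) (nrml d w) = 1"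
proof -
  have "inn d (nrml d w) (nrml d w) = inn d w w / (complex_of_real (nrm d w) * complex_of_real (nrm d w))"
    unfolding inn_def nrml_def by (simp add: sum_divide_distrib)
  then show ?thesis using nrm_pos[OF assms] by (simp add: inn_self power2_eq_square)
qed

lemma inn_res:
  "inn d (res d P c) y = inn d c y - (\<Sum>p<length P. inn d c (snd (P!p)) * inn d (snd (P!p)) y)"
proof -
  define \<alpha> where "\<alpha> = (\<lambda>q. inn d c (snd (P!q)))"
  have r: "res d P c = (\<lambda>i. c i - (\<Sum>p<length P. \<alpha> p * snd (P!p) i))" unfolding res_def \<alpha>_def ..
  have "inn d (res d P c) y = (\<Sum>i<d. c i * cnj (y i)) - (\<Sum>i<d. \<Sum>p<length P. \<alpha> p * (snd (P!p) i * cnj (y i)))"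
    unfolding r inn_def by (simp add: left_diff_distrib right_diff_distrib sum_subtractf sum_distrib_right sum_distrib_left mult_ac)
  also have "(\<Sum>i<d. \<Sum>p<length P. \<alpha> p * (snd (P!p) i * cnj (y i)))
       = (\<Sum>p<length P. \<alpha> p * inn d (snd (P!p)) y)"
    unfolding inn_def sum_distrib_left by (rule sum.swap)
  finally show ?thesis unfolding \<alpha>_def inn_def by simp
qed

lemma inn_cnj_real: "inn d w (nrml d w) = complex_of_real (nrm d w)" if "\<not> isz d w"
proof -
  have "inn d w (nrml d w) = cnj (inn d (nrml d w) w)" by (rule inn_cnj)
  also have "\<dots> = cnj (complex_of_real ((nrm d w)\<^sup>2) / complex_of_real (nrm d w))"
    by (simp add: inn_nrml_left inn_self)
  also have "\<dots> = complex_of_real (nrm d w)" using nrm_pos[OF that] by (simp add: power2_eq_square)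
  finally show ?thesis .
qed

lemma gs_step:
  assumes inv: "Inv d P" and nz: "\<not> isz d (res d P c)"
  defines "o' \<equiv> nrml d (res d P c)"
  shows "Inv d (P @ [(c, o')])" "SP d (P @ [(c, o')]) c"
    "\<And>c'. SP d P c' \<Longrightarrow> SP d (P @ [(c, o')]) c'"
proof -
  let ?w = "res d P c" let ?N = "nrm d ?w"
  have on: "ON d P" and tri: "TRI d P" and sp: "\<And>p. p < length P \<Longrightarrow> SP d P (fst (P!p))"
    using inv unfolding Inv_def by auto
  have a: "inn d o' (snd (P!q)) = 0" if "q < length P" for q
    unfolding o'_def inn_nrml_left using inn_res_old[OF on that] by simp
  have b: "inn d (snd (P!q)) o' = 0" if "q < length P" for q
    using a[OF that] inn_cnj[of d "snd (P!q)" o'] by simp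
  have c: "inn d o' o' = 1" unfolding o'_def by (rule inn_nrml_self[OF nz])
  have d: "inn d c' o' = 0" if "SP d P c'" for c' by (rule SP_orth[OF that b])
  have e: "inn d c o' = complex_of_real ?N"
  proof -
    have "inn d ?w o' = inn d c o' - (\<Sum>p<length P. inn d c (snd (P!p)) * inn d (snd (P!p)) o')"
      by (rule inn_res)
    also have "(\<Sum>p<length P. inn d c (snd (P!p)) * inn d (snd (P!p)) o') = 0" using b by simp
    finally show ?thesis using inn_cnj_real[OF nz] unfolding o'_def by simp
  qed
  have Npos: "0 < ?N" by (rule nrm_pos[OF nz])
  show spc: "SP d (P @ [(c, o')]) c"
    unfolding SP_def
  proof (intro allI impI)
    fix i assume i: "i < d"
    have "(\<Sum>q<length (P @ [(c, o')]). inn d c (snd ((P @ [(c, o')])!q)) * snd ((P @ [(c, o')])!q) i)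
        = (\<Sum>q<length P. inn d c (snd (P!q)) * snd (P!q) i) + inn d c o' * o' i"
      by (simp add: nth_append)
    also have "\<dots> = (c i - ?w i) + complex_of_real ?N * (?w i / complex_of_real ?N)"
      using i unfolding e by (simp add: res_def o'_def nrml_def)
    also have "\<dots> = c i" using Npos by simp
    finally show "c i = (\<Sum>q<length (P @ [(c, o')]). inn d c (snd ((P @ [(c, o')])!q)) * snd ((P @ [(c, o')])!q) i)" by simp
  qed
  show spo: "SP d (P @ [(c, o')]) c'" if "SP d P c'" for c'
    by (rule SP_snoc[OF that]) (simp add: d[OF that])
  have "ON d (P @ [(c, o')])"
    unfolding ON_def
  proof (intro allI impI)
    fix p q assume "p < length (P @ [(c, o')])" "q < length (P @ [(c, o')])"
    then have p: "p \<le> length P" and q: "q \<le> length P" by auto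
    show "inn d (snd ((P @ [(c, o')])!p)) (snd ((P @ [(c, o')])!q)) = (if p = q then 1 else 0)"
    proof (cases "p = length P"; cases "q = length P")
      assume "p = length P" "q = length P" then show ?thesis using c by (simp add: nth_append)
    next
      assume "p = length P" "q \<noteq> length P" then show ?thesis using a[of q] q by (simp add: nth_append)
    next
      assume "p \<noteq> length P" "q = length P" then show ?thesis using b[of p] p by (simp add: nth_append)
    next
      assume "p \<noteq> length P" "q \<noteq> length P" then show ?thesis using on p q unfolding ON_def by (simp add: nth_append)
    qed
  qed
  moreover have "TRI d (P @ [(c, o')])"
    unfolding TRI_def
  proof (intro conjI allI impI)
    fix p q assume "p < length (P @ [(c, o')])" "q < length (P @ [(c, o')])" "p < q"
    then have p: "p < length P" and q: "q \<le> length P" by auto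
    show "inn d (fst ((P @ [(c, o')])!p)) (snd ((P @ [(c, o')])!q)) = 0"
    proof (cases "q = length P")
      case True then show ?thesis using d[OF sp[OF p]] p by (simp add: nth_append)
    next
      case False then show ?thesis using tri p q \<open>p < q\<close> unfolding TRI_def by (simp add: nth_append)
    qed
  next
    fix p assume "p < length (P @ [(c, o')])"
    then have p: "p \<le> length P" by auto
    show "inn d (fst ((P @ [(c, o')])!p)) (snd ((P @ [(c, o')])!p)) \<noteq> 0"
    proof (cases "p = length P")
      case True then show ?thesis using e Npos by (simp add: nth_append)
    next
      case False then show ?thesis using tri p unfolding TRI_def by (simp add: nth_append)
    qed
  qed
  moreover have "SP d (P @ [(c, o')]) (fst ((P @ [(c, o')])!p))" if "p < length (P @ [(c, o')])" for p
  proof (cases "p = length P")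
    case True then show ?thesis using spc by (simp add: nth_append)
  next
    case False then have "p < length P" using that by simp
    then show ?thesis using spo[OF sp] by (simp add: nth_append)
  qed
  ultimately show "Inv d (P @ [(c, o')])" unfolding Inv_def by blast
qed

lemma gs_isz:
  assumes "isz d (res d P c)" shows "SP d P c"
  using assms unfolding SP_def isz_def res_def by (auto simp: algebra_simps)

lemma gs_inv:
  assumes "Inv d P" "\<forall>c\<in>C. SP d P c"
  shows "Inv d (gs d cs P) \<and> (\<forall>c\<in>C \<union> set cs. SP d (gs d cs P) c) \<and> set (map fst (gs d cs P)) \<subseteq> set (map fst P) \<union> set cs"
  using assms
proof (induction cs arbitrary: P C)
  case Nil then show ?case by simp
next
  case (Cons c cs)
  show ?case
  proof (cases "isz d (res d P c)")
    case True
    have "\<forall>c'\<in>insert c C. SP d P c'" using Cons.prems gs_isz[OF True] by auto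
    from Cons.IH[OF Cons.prems(1) this] True show ?thesis by auto
  next
    case False
    let ?P' = "P @ [(c, nrml d (res d P c))]"
    have "Inv d ?P'" by (rule gs_step(1)[OF Cons.prems(1) False])
    moreover have "\<forall>c'\<in>insert c C. SP d ?P' c'"
      using gs_step(2,3)[OF Cons.prems(1) False] Cons.prems(2) by auto
    ultimately have "Inv d (gs d cs ?P') \<and> (\<forall>c\<in>insert c C \<union> set cs. SP d (gs d cs ?P') c) \<and> set (map fst (gs d cs ?P')) \<subseteq> set (map fst ?P') \<union> set cs"
      by (rule Cons.IH)
    then show ?thesis using False by auto
  qed
qed

lemma Inv_Nil: "Inv d []" unfolding Inv_def ON_def TRI_def by simp

definition cv :: "cvec \<Rightarrow> cvec" where "cv v = (\<lambda>i. cnj (v i))"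

lemma inn_cv: "inn d (cv x) (cv y) = cnj (inn d x y)"
  unfolding inn_def cv_def by simp

lemma nrm_cv: "nrm d (cv w) = nrm d w" unfolding nrm_def cv_def by simp

lemma res_cv: "res d (map (map_prod cv cv) P) (cv c) = cv (res d P c)"
  unfolding res_def cv_def by (auto simp: inn_cv[unfolded cv_def] intro!: ext)

lemma nrml_cv: "nrml d (cv w) = cv (nrml d w)"
  unfolding nrml_def by (auto simp: nrm_cv[unfolded cv_def] cv_def intro!: ext)

lemma isz_cv: "isz d (cv w) = isz d w" unfolding isz_def cv_def by simp

lemma gs_cv: "gs d (map cv cs) (map (map_prod cv cv) P) = map (map_prod cv cv) (gs d cs P)"
proof (induction cs arbitrary: P)
  case Nil then show ?case by simp
next
  case (Cons c cs)
  have "map (map_prod cv cv) P @ [(cv c, nrml d (res d (map (map_prod cv cv) P) (cv c)))]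
      = map (map_prod cv cv) (P @ [(c, nrml d (res d P c))])"
    by (simp add: res_cv nrml_cv)
  then show ?case using Cons.IH[of "P @ [(c, nrml d (res d P c))]"] Cons.IH[of P] by (simp add: res_cv isz_cv)
qed

lemma gs_inj:
  assumes "Inv d P"
  shows "inj_on (\<lambda>p. vec d (fst (P!p))) {..<length P}"
proof (rule inj_onI, rule ccontr)
  fix p q assume p: "p \<in> {..<length P}" and q: "q \<in> {..<length P}"
    and eq: "vec d (fst (P!p)) = vec d (fst (P!q))" and ne: "p \<noteq> q"
  have tri: "TRI d P" using assms unfolding Inv_def by auto
  have same: "inn d (fst (P!p)) y = inn d (fst (P!q)) y" for y
  proof -
    have "\<forall>i<d. fst (P!p) i = fst (P!q) i" using eq by (metis index_vec)
    then show ?thesis unfolding inn_def by (intro sum.cong refl) simp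
  qed
  show False
  proof (cases "p < q")
    case True
    then have "inn d (fst (P!p)) (snd (P!q)) = 0" using tri p q unfolding TRI_def by auto
    moreover have "inn d (fst (P!q)) (snd (P!q)) \<noteq> 0" using tri q unfolding TRI_def by auto
    ultimately show False using same by simp
  next
    case False
    then have "q < p" using ne by simp
    then have "inn d (fst (P!q)) (snd (P!p)) = 0" using tri p q unfolding TRI_def by auto
    moreover have "inn d (fst (P!p)) (snd (P!p)) \<noteq> 0" using tri p unfolding TRI_def by auto
    ultimately show False using same by simp
  qed
qed

lemma gs_LI:
  fixes A :: "complex Matrix.vec set" and a :: "complex Matrix.vec \<Rightarrow> complex"
  assumes inv: "Inv d P" and finA: "finite A" and Asub: "A \<subseteq> (\<lambda>p. vec d (fst (P!p))) ` {..<length P}"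
    and comb: "\<forall>i<d. (\<Sum>x\<in>A. a x * x $ i) = 0" and v: "v \<in> A"
  shows "a v = 0"
proof (rule ccontr)
  assume av: "a v \<noteq> 0"
  have tri: "TRI d P" using inv unfolding Inv_def by auto
  let ?V = "\<lambda>p. vec d (fst (P!p))"
  define T where "T = {p. p < length P \<and> ?V p \<in> A \<and> a (?V p) \<noteq> 0}"
  obtain p0 where p0: "p0 < length P" "v = ?V p0" using v Asub by auto
  have "p0 \<in> T" unfolding T_def using p0 v av by auto
  have finT: "finite T" unfolding T_def by simp
  define m where "m = Max T"
  have mT: "m \<in> T" unfolding m_def using finT \<open>p0 \<in> T\<close> by (intro Max_in) auto
  have mmax: "p \<le> m" if "p \<in> T" for p unfolding m_def using finT that by simp
  have m: "m < length P" "?V m \<in> A" "a (?V m) \<noteq> 0" using mT unfolding T_def by auto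
  let ?o = "snd (P!m)"
  have ip: "(\<Sum>i<d. x $ i * cnj (?o i)) = inn d (fst (P!q)) ?o" if "x = ?V q" for x q
    unfolding inn_def that by (intro sum.cong refl) simp
  have "0 = (\<Sum>i<d. (\<Sum>x\<in>A. a x * x $ i) * cnj (?o i))" using comb by simp
  also have "\<dots> = (\<Sum>x\<in>A. a x * (\<Sum>i<d. x $ i * cnj (?o i)))"
    unfolding sum_distrib_right sum_distrib_left by (subst sum.swap) (simp only: mult_ac)
  also have "\<dots> = a (?V m) * (\<Sum>i<d. ?V m $ i * cnj (?o i)) + (\<Sum>x\<in>A - {?V m}. a x * (\<Sum>i<d. x $ i * cnj (?o i)))"
    by (rule sum.remove[OF finA m(2)])
  also have "(\<Sum>x\<in>A - {?V m}. a x * (\<Sum>i<d. x $ i * cnj (?o i))) = 0"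
  proof (rule sum.neutral, rule ballI)
    fix x assume x: "x \<in> A - {?V m}"
    then obtain q where q: "q < length P" "x = ?V q" using Asub by auto
    have "q \<noteq> m" using q x by auto
    show "a x * (\<Sum>i<d. x $ i * cnj (?o i)) = 0"
    proof (cases "q < m")
      case True
      then have "inn d (fst (P!q)) ?o = 0" using tri q m unfolding TRI_def by auto
      then show ?thesis using ip[OF q(2)] by simp
    next
      case False
      then have "q > m" using \<open>q \<noteq> m\<close> by simp
      then have "q \<notin> T" using mmax by force
      then have "a x = 0" using q x unfolding T_def by auto
      then show ?thesis by simp
    qed
  qed
  also have "(\<Sum>i<d. ?V m $ i * cnj (?o i)) = inn d (fst (P!m)) ?o" by (rule ip) simp
  finally have "a (?V m) * inn d (fst (P!m)) ?o = 0" by simp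
  moreover have "inn d (fst (P!m)) ?o \<noteq> 0" using tri m unfolding TRI_def by auto
  ultimately show False using m(3) by simp
qed

lemma gs_lin_indpt:
  assumes inv: "Inv d P"
  shows "\<not> module.lin_dep class_ring (module_vec TYPE(complex) d) ((\<lambda>p. vec d (fst (P!p))) ` {..<length P})"
proof
  assume "module.lin_dep class_ring (module_vec TYPE(complex) d) ((\<lambda>p. vec d (fst (P!p))) ` {..<length P})"
  then obtain A a v where A: "finite A" "A \<subseteq> (\<lambda>p. vec d (fst (P!p))) ` {..<length P}"
    "module.lincomb (module_vec TYPE(complex) d) a A = \<zero>\<^bsub>module_vec TYPE(complex) d\<^esub>" "v \<in> A" "a v \<noteq> \<zero>\<^bsub>class_ring\<^esub>"
    unfolding module.lin_dep_def[OF vec_module] by blast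
  have Acar: "A \<subseteq> carrier_vec d" using A(2) by auto
  have "\<forall>i<d. (\<Sum>x\<in>A. a x * x $ i) = 0"
  proof (intro allI impI)
    fix i assume i: "i < d"
    have "(\<Sum>x\<in>A. a x * x $ i) = module.lincomb (module_vec TYPE(complex) d) a A $ i"
      using vec_space.lincomb_index[OF i Acar] by simp
    also have "\<dots> = 0" unfolding A(3) using i by (simp add: module_vec_def)
    finally show "(\<Sum>x\<in>A. a x * x $ i) = 0" .
  qed
  from gs_LI[OF inv A(1) A(2) this A(4)] A(5) show False by (simp add: class_ring_simps)
qed

lemma lborel_affine_pre:
  fixes s \<rho> :: real and B :: "real set"
  assumes rho: "0 < \<rho>" and B: "B \<in> sets borel"
  shows "emeasure lborel {x. (x - s) / \<rho> \<in> B} = ennreal \<rho> * emeasure lborel B"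
proof -
  have S: "{x. (x - s) / \<rho> \<in> B} \<in> sets borel"
  proof -
    have "(\<lambda>x::real. (x - s) / \<rho>) \<in> borel_measurable borel" by measurable
    then have "(\<lambda>x::real. (x - s) / \<rho>) -` B \<inter> space borel \<in> sets borel" using B by (rule measurable_sets)
    then show ?thesis by (simp add: vimage_def)
  qed
  have "emeasure lborel {x. (x - s) / \<rho> \<in> B}
      = emeasure (density (distr lborel borel (\<lambda>x. s + \<rho> * x)) (\<lambda>_. ennreal \<bar>\<rho>\<bar>)) {x. (x - s) / \<rho> \<in> B}"
    using lborel_real_affine[of \<rho> s] rho by simp
  also have "\<dots> = ennreal \<rho> * emeasure (distr lborel borel (\<lambda>x. s + \<rho> * x)) {x. (x - s) / \<rho> \<in> B}"
    using S rho by (subst emeasure_density_const) auto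
  also have "emeasure (distr lborel borel (\<lambda>x. s + \<rho> * x)) {x. (x - s) / \<rho> \<in> B}
      = emeasure lborel ((\<lambda>x. s + \<rho> * x) -` {x. (x - s) / \<rho> \<in> B} \<inter> space lborel)"
    using S by (subst emeasure_distr) auto
  also have "(\<lambda>x. s + \<rho> * x) -` {x. (x - s) / \<rho> \<in> B} \<inter> space lborel = B"
    using rho by auto
  finally show ?thesis .
qed

interpretation lb_prod: product_sigma_finite "\<lambda>_::'i. lborel :: real measure"
  by (simp add: product_sigma_finite_def lborel.sigma_finite_measure_axioms)

lemma PiM_affine:
  fixes I :: "'i set" and t :: "'i \<Rightarrow> real"
  assumes finI: "finite I" and rho: "0 < \<rho>"
    and A: "A \<in> sets (PiM I (\<lambda>_. lborel))"
  shows "emeasure (PiM I (\<lambda>_. lborel)) ((\<lambda>\<omega>. \<lambda>i\<in>I. (\<omega> i - t i) / \<rho>) -` A \<inter> space (PiM I (\<lambda>_. lborel)))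
       = ennreal (\<rho> ^ card I) * emeasure (PiM I (\<lambda>_. lborel)) A"
proof -
  let ?M = "PiM I (\<lambda>_. lborel :: real measure)"
  let ?f = "\<lambda>\<omega>. \<lambda>i\<in>I. (\<omega> i - t i) / \<rho>"
  have fm: "?f \<in> measurable ?M ?M"
    by (intro measurable_restrict) (measurable)
  let ?D = "distr ?M ?M ?f"
  have eq: "density ?D (\<lambda>_. ennreal (1 / \<rho> ^ card I)) = ?M"
  proof (rule lb_prod.PiM_eqI[OF finI])
    show "sets (density ?D (\<lambda>_. ennreal (1 / \<rho> ^ card I))) = sets ?M" by simp
  next
    fix B :: "'i \<Rightarrow> real set" assume B: "\<And>i. i \<in> I \<Longrightarrow> B i \<in> sets lborel"
    have box: "Pi\<^sub>E I B \<in> sets ?M" using B by (intro sets_PiM_I_finite finI) auto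
    have pre: "?f -` Pi\<^sub>E I B \<inter> space ?M = Pi\<^sub>E I (\<lambda>i. {x. (x - t i) / \<rho> \<in> B i})"
      by (auto simp: space_PiM PiE_iff extensional_def)
    have "emeasure (density ?D (\<lambda>_. ennreal (1 / \<rho> ^ card I))) (Pi\<^sub>E I B)
        = ennreal (1 / \<rho> ^ card I) * emeasure ?D (Pi\<^sub>E I B)"
      using box by (subst emeasure_density_const) auto
    also have "emeasure ?D (Pi\<^sub>E I B) = emeasure ?M (Pi\<^sub>E I (\<lambda>i. {x. (x - t i) / \<rho> \<in> B i}))"
      using box fm by (subst emeasure_distr) (auto simp: pre)
    also have "\<dots> = (\<Prod>i\<in>I. emeasure lborel {x. (x - t i) / \<rho> \<in> B i})"
    proof (rule lb_prod.emeasure_PiM[OF finI])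
      fix i assume i: "i \<in> I"
      have "(\<lambda>x::real. (x - t i) / \<rho>) \<in> borel_measurable borel" by measurable
      then have "(\<lambda>x::real. (x - t i) / \<rho>) -` B i \<inter> space borel \<in> sets borel" using B[OF i] by (intro measurable_sets) auto
      then show "{x. (x - t i) / \<rho> \<in> B i} \<in> sets lborel" by (simp add: vimage_def)
    qed
    also have "\<dots> = (\<Prod>i\<in>I. ennreal \<rho> * emeasure lborel (B i))"
      using B by (intro prod.cong refl lborel_affine_pre[OF rho]) auto
    also have "\<dots> = ennreal (\<rho> ^ card I) * (\<Prod>i\<in>I. emeasure lborel (B i))"
      using rho by (simp add: prod.distrib ennreal_power)
    also have "ennreal (1 / \<rho> ^ card I) * (ennreal (\<rho> ^ card I) * (\<Prod>i\<in>I. emeasure lborel (B i))) = (\<Prod>i\<in>I. emeasure lborel (B i))"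
      using rho by (simp add: ennreal_mult[symmetric] mult.assoc[symmetric] del: ennreal_mult'')
    finally show "emeasure (density ?D (\<lambda>_. ennreal (1 / \<rho> ^ card I))) (Pi\<^sub>E I B) = (\<Prod>i\<in>I. emeasure lborel (B i))" .
  qed
  have "emeasure ?M A = ennreal (1 / \<rho> ^ card I) * emeasure ?D A"
    using A by (subst eq[symmetric]) (subst emeasure_density_const, auto)
  also have "emeasure ?D A = emeasure ?M (?f -` A \<inter> space ?M)"
    using A fm by (subst emeasure_distr) auto
  finally have "emeasure ?M A = ennreal (1 / \<rho> ^ card I) * emeasure ?M (?f -` A \<inter> space ?M)" .
  then have "ennreal (\<rho> ^ card I) * emeasure ?M A = ennreal (\<rho> ^ card I) * ennreal (1 / \<rho> ^ card I) * emeasure ?M (?f -` A \<inter> space ?M)"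
    by (simp add: mult.assoc)
  also have "ennreal (\<rho> ^ card I) * ennreal (1 / \<rho> ^ card I) = 1"
    using rho by (simp add: ennreal_mult[symmetric] del: ennreal_mult'')
  finally show ?thesis by (simp add: restrict_def)
qed

locale pnorm =
  fixes p :: "('i::countable \<Rightarrow> real) \<Rightarrow> real" and I :: "'i set" and C :: real
  assumes finI: "finite I"
    and tri: "\<And>x y. p (\<lambda>i. x i + y i) \<le> p x + p y"
    and hom: "\<And>c x. p (\<lambda>i. c * x i) = \<bar>c\<bar> * p x"
    and low: "\<And>x i. i \<in> I \<Longrightarrow> \<bar>x i\<bar> \<le> C * p x"
    and cl: "closed {x. p x \<le> 1}"
begin

lemma p0: "p (\<lambda>i. 0) = 0"
  using hom[of 0 "\<lambda>i. 0"] by simp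

lemma pneg: "p (\<lambda>i. - x i) = p x"
  using hom[of "-1" x] by simp

lemma pnonneg: "0 \<le> p x"
proof -
  have "p (\<lambda>i. x i + - x i) \<le> p x + p (\<lambda>i. - x i)" by (rule tri)
  then show ?thesis by (simp add: p0 pneg)
qed

lemma psym: "p (\<lambda>i. x i - y i) = p (\<lambda>i. y i - x i)"
  using pneg[of "\<lambda>i. y i - x i"] by simp

lemma ptri: "p (\<lambda>i. x i - z i) \<le> p (\<lambda>i. x i - y i) + p (\<lambda>i. y i - z i)"
  using tri[of "\<lambda>i. x i - y i" "\<lambda>i. y i - z i"] by simp

definition e :: "'i \<Rightarrow> 'i \<Rightarrow> real" where "e i = (\<lambda>j. if j = i then 1 else 0)"

lemma psum_aux:
  assumes "finite F"
  shows "p (\<lambda>j. if j \<in> F then x j else 0) \<le> (\<Sum>i\<in>F. \<bar>x i\<bar> * p (e i))"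
  using assms
proof (induction F rule: finite_induct)
  case empty then show ?case by (simp add: p0)
next
  case (insert i F)
  have "(\<lambda>j. if j \<in> insert i F then x j else 0) = (\<lambda>j. (if j \<in> F then x j else 0) + x i * e i j)"
    using insert(2) by (auto simp: e_def)
  then have "p (\<lambda>j. if j \<in> insert i F then x j else 0) \<le> p (\<lambda>j. if j \<in> F then x j else 0) + p (\<lambda>j. x i * e i j)"
    using tri by simp
  also have "\<dots> \<le> (\<Sum>i\<in>F. \<bar>x i\<bar> * p (e i)) + \<bar>x i\<bar> * p (e i)"
    using insert(3) hom[of "x i" "e i"] by simp
  finally show ?case using insert(1,2) by (simp add: add.commute)
qed

lemma psum:
  assumes "\<And>j. j \<notin> I \<Longrightarrow> x j = 0"
  shows "p x \<le> (\<Sum>i\<in>I. \<bar>x i\<bar> * p (e i))"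
proof -
  have "x = (\<lambda>j. if j \<in> I then x j else 0)" using assms by auto
  then show ?thesis using psum_aux[OF finI, of x] by simp
qed

abbreviation "M \<equiv> PiM I (\<lambda>_. lborel :: real measure)"

definition psi :: "('i \<Rightarrow> real) \<Rightarrow> 'i \<Rightarrow> real" where
  "psi \<omega> = (\<lambda>i. if i \<in> I then \<omega> i else 0)"

definition Bl :: "('i \<Rightarrow> real) \<Rightarrow> real \<Rightarrow> ('i \<Rightarrow> real) set" where
  "Bl c \<rho> = {\<omega> \<in> space M. p (\<lambda>i. psi \<omega> i - c i) \<le> \<rho>}"

lemma psi_meas: "psi \<in> borel_measurable M"
  unfolding psi_def
proof (rule measurable_coordinatewise_then_product)
  fix i show "(\<lambda>x. if i \<in> I then x i else 0) \<in> borel_measurable M"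
    by (cases "i \<in> I") (simp_all add: measurable_component_singleton)
qed

lemma K_sets: "Bl (\<lambda>_. 0) 1 \<in> sets M"
proof -
  have "{x. p x \<le> 1} \<in> sets borel" using cl by (rule borel_closed)
  then have "psi -` {x. p x \<le> 1} \<inter> space M \<in> sets M" using psi_meas by (rule measurable_sets[rotated])
  moreover have "psi -` {x. p x \<le> 1} \<inter> space M = Bl (\<lambda>_. 0) 1" unfolding Bl_def by auto
  ultimately show ?thesis by simp
qed

lemma Bl_pre:
  assumes rho: "0 < \<rho>" and c: "\<And>j. j \<notin> I \<Longrightarrow> c j = 0"
  shows "Bl c \<rho> = (\<lambda>\<omega>. \<lambda>i\<in>I. (\<omega> i - c i) / \<rho>) -` Bl (\<lambda>_. 0) 1 \<inter> space M"
proof -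
  have "psi (\<lambda>i\<in>I. (\<omega> i - c i) / \<rho>) = (\<lambda>i. (1 / \<rho>) * (psi \<omega> i - c i))" for \<omega>
    unfolding psi_def using c by (auto simp: field_simps)
  moreover have "p (\<lambda>i. (1 / \<rho>) * (psi \<omega> i - c i)) \<le> 1 \<longleftrightarrow> p (\<lambda>i. psi \<omega> i - c i) \<le> \<rho>" for \<omega>
  proof -
    have "p (\<lambda>i. (1 / \<rho>) * (psi \<omega> i - c i)) = (1 / \<rho>) * p (\<lambda>i. psi \<omega> i - c i)"
      using hom[of "1 / \<rho>" "\<lambda>i. psi \<omega> i - c i"] rho by simp
    then show ?thesis using rho by (simp add: divide_le_eq mult.commute)
  qed
  moreover have "(\<lambda>i\<in>I. (\<omega> i - c i) / \<rho>) \<in> space M" for \<omega> by (simp add: space_PiM)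
  ultimately show ?thesis unfolding Bl_def by auto
qed

lemma Bl_sets:
  assumes rho: "0 < \<rho>" and c: "\<And>j. j \<notin> I \<Longrightarrow> c j = 0"
  shows "Bl c \<rho> \<in> sets M"
proof -
  have "(\<lambda>\<omega>. \<lambda>i\<in>I. (\<omega> i - c i) / \<rho>) \<in> measurable M M"
    by (intro measurable_restrict) measurable
  from measurable_sets[OF this K_sets] show ?thesis using Bl_pre[OF rho c] by simp
qed

lemma Bl_measure:
  assumes rho: "0 < \<rho>" and c: "\<And>j. j \<notin> I \<Longrightarrow> c j = 0"
  shows "emeasure M (Bl c \<rho>) = ennreal (\<rho> ^ card I) * emeasure M (Bl (\<lambda>_. 0) 1)"
  using PiM_affine[OF finI rho K_sets, of c] Bl_pre[OF rho c] by simp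

lemma box_measure:
  assumes "0 \<le> a"
  shows "emeasure M (Pi\<^sub>E I (\<lambda>_. {-a..a})) = ennreal ((2 * a) ^ card I)"
proof -
  have "emeasure M (Pi\<^sub>E I (\<lambda>_. {-a..a})) = (\<Prod>i\<in>I. emeasure lborel {-a..a})"
    by (rule lb_prod.emeasure_PiM[OF finI]) simp
  also have "emeasure lborel {-a..a} = ennreal (2 * a)"
    using assms by (subst emeasure_lborel_Icc) auto
  also have "(\<Prod>i\<in>I. ennreal (2 * a)) = ennreal (2 * a) ^ card I"
    by (rule prod_constant)
  also have "\<dots> = ennreal ((2 * a) ^ card I)"
    using assms by (intro ennreal_power) simp
  finally show ?thesis .
qed

lemma K_pos_fin: "0 < emeasure M (Bl (\<lambda>_. 0) 1) \<and> emeasure M (Bl (\<lambda>_. 0) 1) < \<infinity>"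
proof
  define S where "S = (\<Sum>i\<in>I. p (e i))"
  have S0: "0 \<le> S" unfolding S_def by (simp add: sum_nonneg pnonneg)
  define a where "a = 1 / (1 + S)"
  have a0: "0 < a" unfolding a_def using S0 by simp
  have "Pi\<^sub>E I (\<lambda>_. {-a..a}) \<subseteq> Bl (\<lambda>_. 0) 1"
  proof
    fix \<omega> assume w: "\<omega> \<in> Pi\<^sub>E I (\<lambda>_. {-a..a})"
    have "p (psi \<omega>) \<le> (\<Sum>i\<in>I. \<bar>psi \<omega> i\<bar> * p (e i))" by (rule psum) (simp add: psi_def)
    also have "\<dots> \<le> (\<Sum>i\<in>I. a * p (e i))"
      using w by (intro sum_mono mult_right_mono pnonneg) (auto simp: psi_def PiE_iff abs_le_iff)
    also have "\<dots> = a * S" unfolding S_def by (simp add: sum_distrib_left)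
    also have "\<dots> \<le> 1" unfolding a_def using S0 by simp
    moreover have "\<omega> \<in> space M" using w by (auto simp: space_PiM PiE_iff)
    ultimately show "\<omega> \<in> Bl (\<lambda>_. 0) 1" unfolding Bl_def by simp
  qed
  then have "emeasure M (Pi\<^sub>E I (\<lambda>_. {-a..a})) \<le> emeasure M (Bl (\<lambda>_. 0) 1)"
    by (intro emeasure_mono K_sets)
  moreover have "0 < emeasure M (Pi\<^sub>E I (\<lambda>_. {-a..a}))"
    using a0 by (simp add: box_measure)
  ultimately show "0 < emeasure M (Bl (\<lambda>_. 0) 1)" by simp
next
  define D where "D = max C 0 + 1"
  have D0: "0 \<le> D" unfolding D_def by simp
  have "Bl (\<lambda>_. 0) 1 \<subseteq> Pi\<^sub>E I (\<lambda>_. {-D..D})"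
  proof
    fix \<omega> assume w: "\<omega> \<in> Bl (\<lambda>_. 0) 1"
    then have sp: "\<omega> \<in> space M" and pw: "p (psi \<omega>) \<le> 1" unfolding Bl_def by auto
    have "\<bar>\<omega> i\<bar> \<le> D" if i: "i \<in> I" for i
    proof -
      have "\<bar>\<omega> i\<bar> = \<bar>psi \<omega> i\<bar>" using i by (simp add: psi_def)
      also have "\<dots> \<le> C * p (psi \<omega>)" by (rule low[OF i])
      also have "\<dots> \<le> max C 0 * p (psi \<omega>)" by (intro mult_right_mono pnonneg) simp
      also have "\<dots> \<le> max C 0 * 1" by (intro mult_left_mono pw) simp
      finally show ?thesis unfolding D_def by simp
    qed
    then have "\<omega> i \<in> {-D..D}" if "i \<in> I" for i
    proof -
      have "\<bar>\<omega> i\<bar> \<le> D" using that \<open>\<And>i. i \<in> I \<Longrightarrow> \<bar>\<omega> i\<bar> \<le> D\<close> by blast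
      then show ?thesis by (simp add: abs_le_iff)
    qed
    moreover have "\<omega> \<in> extensional I" using sp by (simp add: space_PiM PiE_iff)
    ultimately show "\<omega> \<in> Pi\<^sub>E I (\<lambda>_. {-D..D})" unfolding PiE_iff by blast
  qed
  then have "emeasure M (Bl (\<lambda>_. 0) 1) \<le> emeasure M (Pi\<^sub>E I (\<lambda>_. {-D..D}))"
    by (rule emeasure_mono) (rule sets_PiM_I_finite[OF finI], simp)
  also have "\<dots> < \<infinity>" using D0 by (simp add: box_measure)
  finally show "emeasure M (Bl (\<lambda>_. 0) 1) < \<infinity>" .
qed

theorem packing:
  assumes dpos: "0 < \<delta>" and finT: "finite T"
    and Tsub: "T \<subseteq> {x. (\<forall>j. j \<notin> I \<longrightarrow> x j = 0) \<and> p x \<le> 1}"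
    and sep: "\<And>x y. x \<in> T \<Longrightarrow> y \<in> T \<Longrightarrow> x \<noteq> y \<Longrightarrow> \<delta> < p (\<lambda>i. x i - y i)"
  shows "real (card T) \<le> (1 + 2 / \<delta>) ^ card I"
proof -
  obtain V where V: "emeasure M (Bl (\<lambda>_. 0) 1) = ennreal V" "0 < V"
    using K_pos_fin by (cases "emeasure M (Bl (\<lambda>_. 0) 1)") auto
  have supp: "\<And>t j. t \<in> T \<Longrightarrow> j \<notin> I \<Longrightarrow> t j = 0" using Tsub by auto
  have pt: "\<And>t. t \<in> T \<Longrightarrow> p t \<le> 1" using Tsub by auto
  let ?B = "\<lambda>t. Bl t (\<delta> / 2)"
  have Bsets: "?B t \<in> sets M" if "t \<in> T" for t using Bl_sets[of "\<delta>/2" t] dpos supp[OF that] by simp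
  have disj: "disjoint_family_on ?B T"
    unfolding disjoint_family_on_def
  proof (intro ballI impI)
    fix t t' assume t: "t \<in> T" and t': "t' \<in> T" and ne: "t \<noteq> t'"
    show "?B t \<inter> ?B t' = {}"
    proof (rule ccontr)
      assume "?B t \<inter> ?B t' \<noteq> {}"
      then obtain \<omega> where w1: "p (\<lambda>i. psi \<omega> i - t i) \<le> \<delta>/2" and w2: "p (\<lambda>i. psi \<omega> i - t' i) \<le> \<delta>/2"
        unfolding Bl_def by auto
      have "p (\<lambda>i. t i - t' i) \<le> p (\<lambda>i. t i - psi \<omega> i) + p (\<lambda>i. psi \<omega> i - t' i)" by (rule ptri)
      also have "\<dots> \<le> \<delta>" using w1 w2 psym[of t "psi \<omega>"] by simp
      finally show False using sep[OF t t' ne] by simp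
    qed
  qed
  have sub: "(\<Union>t\<in>T. ?B t) \<subseteq> Bl (\<lambda>_. 0) (1 + \<delta>/2)"
  proof (intro UN_least subsetI)
    fix t \<omega> assume t: "t \<in> T" and w: "\<omega> \<in> ?B t"
    have "p (\<lambda>i. psi \<omega> i - 0) \<le> p (\<lambda>i. psi \<omega> i - t i) + p (\<lambda>i. t i - 0)" by (rule ptri)
    also have "\<dots> \<le> \<delta>/2 + 1" using w pt[OF t] unfolding Bl_def by auto
    finally show "\<omega> \<in> Bl (\<lambda>_. 0) (1 + \<delta>/2)" using w unfolding Bl_def by simp
  qed
  have "(\<Sum>t\<in>T. emeasure M (?B t)) = emeasure M (\<Union>t\<in>T. ?B t)"
    using Bsets disj finT by (intro sum_emeasure) auto
  also have "\<dots> \<le> emeasure M (Bl (\<lambda>_. 0) (1 + \<delta>/2))"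
    using sub dpos by (intro emeasure_mono Bl_sets) auto
  also have "\<dots> = ennreal ((1 + \<delta>/2) ^ card I) * ennreal V"
    using dpos V by (subst Bl_measure) auto
  finally have "(\<Sum>t\<in>T. emeasure M (?B t)) \<le> ennreal ((1 + \<delta>/2) ^ card I * V)"
    using dpos V by (simp add: ennreal_mult)
  moreover have "(\<Sum>t\<in>T. emeasure M (?B t)) = ennreal (real (card T) * ((\<delta>/2) ^ card I * V))"
  proof -
    have "(\<Sum>t\<in>T. emeasure M (?B t)) = (\<Sum>t\<in>T. ennreal ((\<delta>/2) ^ card I * V))"
      using dpos V supp by (intro sum.cong refl) (subst Bl_measure, auto simp: ennreal_mult)
    also have "\<dots> = ennreal (real (card T) * ((\<delta>/2) ^ card I * V))"
      using dpos V by (simp add: ennreal_of_nat_eq_real_of_nat ennreal_mult)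
    finally show ?thesis .
  qed
  ultimately have le: "real (card T) * ((\<delta>/2) ^ card I * V) \<le> (1 + \<delta>/2) ^ card I * V"
    using dpos V by (simp add: ennreal_le_iff)
  have "real (card T) * (\<delta>/2) ^ card I \<le> (1 + \<delta>/2) ^ card I"
    using le V by (simp add: mult.assoc[symmetric])
  then have "real (card T) \<le> (1 + \<delta>/2) ^ card I / (\<delta>/2) ^ card I"
    using dpos by (simp add: le_divide_eq)
  also have "\<dots> = ((1 + \<delta>/2) / (\<delta>/2)) ^ card I"
    by (rule power_divide[symmetric])
  also have "(1 + \<delta>/2) / (\<delta>/2) = 1 + 2 / \<delta>"
    using dpos by (simp add: field_simps)
  finally show ?thesis .
qed

theorem covering:
  assumes dpos: "0 < \<delta>"
    and Ssub: "S \<subseteq> {x. (\<forall>j. j \<notin> I \<longrightarrow> x j = 0) \<and> p x \<le> 1}"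
  shows "\<exists>N. finite N \<and> N \<subseteq> S \<and> real (card N) \<le> (1 + 2 / \<delta>) ^ card I
           \<and> (\<forall>x\<in>S. \<exists>y\<in>N. p (\<lambda>i. x i - y i) \<le> \<delta>)"
proof -
  define P where "P N \<longleftrightarrow> finite N \<and> N \<subseteq> S \<and> (\<forall>x\<in>N. \<forall>y\<in>N. x \<noteq> y \<longrightarrow> \<delta> < p (\<lambda>i. x i - y i))" for N
  have P0: "P {}" unfolding P_def by simp
  have bnd: "card N < nat \<lceil>(1 + 2 / \<delta>) ^ card I\<rceil> + 1" if "P N" for N
  proof -
    have "real (card N) \<le> (1 + 2 / \<delta>) ^ card I"
      using that Ssub unfolding P_def by (intro packing[OF dpos]) auto
    then show ?thesis by linarith
  qed
  have "\<exists>N. P N \<and> (\<forall>N'. P N' \<longrightarrow> card N' \<le> card N)"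
    by (rule ex_has_greatest_nat[of P "{}" card "nat \<lceil>(1 + 2 / \<delta>) ^ card I\<rceil> + 1", OF P0]) (use bnd in blast)
  then obtain N where N: "P N" and Nmax: "\<And>N'. P N' \<Longrightarrow> card N' \<le> card N" by blast
  have net: "\<exists>y\<in>N. p (\<lambda>i. x i - y i) \<le> \<delta>" if x: "x \<in> S" for x
  proof (rule ccontr)
    assume "\<not> ?thesis"
    then have far: "\<And>y. y \<in> N \<Longrightarrow> \<delta> < p (\<lambda>i. x i - y i)" by (meson not_le)
    have xN: "x \<notin> N"
    proof
      assume "x \<in> N"
      from far[OF this] have "\<delta> < p (\<lambda>i. 0)" by simp
      then show False using dpos p0 by simp
    qed
    have "P (insert x N)"
      unfolding P_def
    proof (intro conjI ballI impI)
      show "finite (insert x N)" using N unfolding P_def by simp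
      show "insert x N \<subseteq> S" using N x unfolding P_def by simp
    next
      fix u v assume u: "u \<in> insert x N" and v: "v \<in> insert x N" and uv: "u \<noteq> v"
      show "\<delta> < p (\<lambda>i. u i - v i)"
      proof (cases "u = x")
        case True
        then have "v \<in> N" using v uv by auto
        then show ?thesis using far True by simp
      next
        case False
        then have uN: "u \<in> N" using u by simp
        show ?thesis
        proof (cases "v = x")
          case True then show ?thesis using far[OF uN] psym[of x u] by simp
        next
          case False then have "v \<in> N" using v by simp
          then show ?thesis using N uN uv unfolding P_def by blast
        qed
      qed
    qed
    then have "card (insert x N) \<le> card N" by (rule Nmax)
    moreover have "card (insert x N) = Suc (card N)" using xN N unfolding P_def by simp
    ultimately show False by simp
  qed
  have "real (card N) \<le> (1 + 2 / \<delta>) ^ card I"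
    using N Ssub unfolding P_def by (intro packing[OF dpos]) auto
  moreover have "finite N" "N \<subseteq> S" using N unfolding P_def by auto
  ultimately show ?thesis using net by (intro exI[of _ N]) simp
qed

end

definition fd :: "nat \<Rightarrow> tensor3 \<Rightarrow> nat \<Rightarrow> nat \<Rightarrow> nat \<Rightarrow> complex" where
  "fd n3 X i j k = cdft n3 (\<lambda>l. complex_of_real (X i j l)) k"

definition tprod :: "nat \<Rightarrow> nat \<Rightarrow> tensor3 \<Rightarrow> tensor3 \<Rightarrow> tensor3" where
  "tprod n3 r A B = (\<lambda>i j k. \<Sum>a<r. \<Sum>l<n3. A i a l * B a j ((k + (n3 - l)) mod n3))"

definition fsq :: "nat \<Rightarrow> nat \<Rightarrow> nat \<Rightarrow> tensor3 \<Rightarrow> real" where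
  "fsq n1 n2 n3 X = (\<Sum>i<n1. \<Sum>j<n2. \<Sum>k<n3. (X i j k)\<^sup>2)"

definition box :: "nat \<Rightarrow> nat \<Rightarrow> nat \<Rightarrow> (nat \<times> nat \<times> nat) set" where
  "box n1 n2 n3 = {..<n1} \<times> {..<n2} \<times> {..<n3}"

lemma sum3_box: "(\<Sum>i<n1. \<Sum>j<n2. \<Sum>k<n3. f i j k) = (\<Sum>(i,j,k)\<in>box n1 n2 n3. f i j k)"
  unfolding box_def by (simp add: sum.cartesian_product)

lemma frob_sqrt: "frob_norm n1 n2 n3 X = sqrt (fsq n1 n2 n3 X)"
  unfolding frob_norm_def fsq_def ..

lemma frob_L2: "frob_norm n1 n2 n3 X = L2_set (\<lambda>(i,j,k). X i j k) (box n1 n2 n3)"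
  unfolding frob_norm_def L2_set_def sum3_box by (simp add: case_prod_beta)

lemma cdft_sum: "cdft n (\<lambda>l. \<Sum>a\<in>A. f a l) k = (\<Sum>a\<in>A. cdft n (f a) k)"
  unfolding cdft_def sum_distrib_right by (rule sum.swap)

lemma cdft_diff: "cdft n (\<lambda>l. f l - g l) k = cdft n f k - cdft n g k"
  unfolding cdft_def by (simp add: left_diff_distrib sum_subtractf)

lemma fd_tprod:
  assumes n: "0 < n3"
  shows "fd n3 (tprod n3 r A B) i j k = (\<Sum>a<r. fd n3 A i a k * fd n3 B a j k)"
proof -
  have "fd n3 (tprod n3 r A B) i j k
      = cdft n3 (\<lambda>m. \<Sum>a<r. conv n3 (\<lambda>l. complex_of_real (A i a l)) (\<lambda>l. complex_of_real (B a j l)) m) k"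
    unfolding fd_def tprod_def conv_def by simp
  also have "\<dots> = (\<Sum>a<r. cdft n3 (conv n3 (\<lambda>l. complex_of_real (A i a l)) (\<lambda>l. complex_of_real (B a j l))) k)"
    by (rule cdft_sum)
  also have "\<dots> = (\<Sum>a<r. fd n3 A i a k * fd n3 B a j k)"
    unfolding fd_def by (simp add: cdft_conv[OF n])
  finally show ?thesis .
qed

lemma parseval_tensor:
  assumes n: "0 < n3"
  shows "(\<Sum>i<n1. \<Sum>j<n2. \<Sum>k<n3. (cmod (fd n3 X i j k))\<^sup>2) = real n3 * fsq n1 n2 n3 X"
proof -
  have "(\<Sum>k<n3. (cmod (fd n3 X i j k))\<^sup>2) = real n3 * (\<Sum>k<n3. (X i j k)\<^sup>2)" for i j
    unfolding fd_def parseval_tube[OF n] by simp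
  then show ?thesis unfolding fsq_def sum_distrib_left by simp
qed

lemma fd_negidx:
  assumes n: "0 < n3" and k: "k < n3"
  shows "fd n3 X i j ((n3 - k) mod n3) = cnj (fd n3 X i j k)"
  unfolding fd_def cdft_def cnj_sum
proof (intro sum.cong refl)
  fix l assume "l \<in> {..<n3}"
  have "cis (- 2 * pi * real ((n3 - k) mod n3) * real l / real n3) = cnj (cis (- 2 * pi * real k * real l / real n3))"
  proof (cases "k = 0")
    case True then show ?thesis by simp
  next
    case False
    then have "(n3 - k) mod n3 = n3 - k" using k by auto
    then show ?thesis unfolding cis_cnj
      by (intro cis_eqI[where m="- int l"]) (use k n in \<open>simp add: of_nat_diff field_simps\<close>)
  qed
  then show "complex_of_real (X i j l) * cis (- 2 * pi * real ((n3 - k) mod n3) * real l / real n3)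
      = cnj (complex_of_real (X i j l) * cis (- 2 * pi * real k * real l / real n3))" by simp
qed

lemma cdft_realify:
  assumes n: "0 < n" and sym: "\<And>k. k < n \<Longrightarrow> G ((n - k) mod n) = cnj (G k)" and k: "k < n"
  shows "cdft n (\<lambda>l. complex_of_real (Re (icdft n G l))) k = G k"
proof -
  have "complex_of_real (Re (icdft n G l)) = icdft n G l" for l
    using icdft_real[of n G l, OF n sym] by (simp add: Reals_cnj_iff[symmetric])
  then show ?thesis using dft_idft[OF n k] by simp
qed

lemma SP_parseval:
  assumes sp: "SP d P c" and on: "ON d P"
  shows "(\<Sum>q<length P. (cmod (inn d c (snd (P!q))))\<^sup>2) = (\<Sum>i<d. (cmod (c i))\<^sup>2)"
proof -
  define \<alpha> where "\<alpha> = (\<lambda>q. inn d c (snd (P!q)))"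
  have ceq: "\<forall>i<d. c i = (\<Sum>q<length P. \<alpha> q * snd (P!q) i)" using sp unfolding SP_def \<alpha>_def .
  have "complex_of_real (\<Sum>i<d. (cmod (c i))\<^sup>2) = inn d c c"
    unfolding inn_def of_real_sum by (intro sum.cong refl) (rule complex_norm_square)
  also have "\<dots> = (\<Sum>i<d. (\<Sum>q<length P. \<alpha> q * snd (P!q) i) * cnj (c i))"
    unfolding inn_def using ceq by (intro sum.cong refl) simp
  also have "\<dots> = (\<Sum>q<length P. \<alpha> q * inn d (snd (P!q)) c)"
    unfolding inn_def sum_distrib_right sum_distrib_left by (subst sum.swap) (simp only: mult_ac)
  also have "\<dots> = (\<Sum>q<length P. \<alpha> q * cnj (\<alpha> q))"
    unfolding \<alpha>_def by (simp add: inn_cnj[of d "snd (P!_)" c])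
  also have "\<dots> = complex_of_real (\<Sum>q<length P. (cmod (\<alpha> q))\<^sup>2)"
    unfolding of_real_sum by (intro sum.cong refl) (rule complex_norm_square[symmetric])
  finally show ?thesis unfolding \<alpha>_def by (simp only: of_real_eq_iff)
qed

lemma ON_norm:
  assumes on: "ON d P"
  shows "(\<Sum>i<d. (cmod (\<Sum>q<length P. z q * snd (P!q) i))\<^sup>2) = (\<Sum>q<length P. (cmod (z q))\<^sup>2)"
proof -
  let ?v = "\<lambda>i. \<Sum>q<length P. z q * snd (P!q) i"
  have "complex_of_real (\<Sum>i<d. (cmod (?v i))\<^sup>2) = (\<Sum>i<d. ?v i * cnj (?v i))"
    unfolding of_real_sum by (intro sum.cong refl) (rule complex_norm_square)
  also have "\<dots> = (\<Sum>q<length P. z q * (\<Sum>p<length P. cnj (z p) * inn d (snd (P!q)) (snd (P!p))))"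
    unfolding inn_def cnj_sum sum_distrib_left sum_distrib_right
    by (subst sum_swap3, subst sum.swap) (simp add: mult_ac)
  also have "\<dots> = (\<Sum>q<length P. z q * cnj (z q))"
  proof (rule sum.cong[OF refl])
    fix q assume q: "q \<in> {..<length P}"
    have "(\<Sum>p<length P. cnj (z p) * inn d (snd (P!q)) (snd (P!p))) = (\<Sum>p<length P. cnj (z p) * (if q = p then 1 else 0))"
      using on q unfolding ON_def by (intro sum.cong refl) simp
    also have "\<dots> = cnj (z q)" using q by (simp add: if_distrib sum.delta cong: if_cong)
    finally show "z q * (\<Sum>p<length P. cnj (z p) * inn d (snd (P!q)) (snd (P!p))) = z q * cnj (z q)" by simp
  qed
  also have "\<dots> = complex_of_real (\<Sum>q<length P. (cmod (z q))\<^sup>2)"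
    unfolding of_real_sum by (intro sum.cong refl) (rule complex_norm_square[symmetric])
  finally show ?thesis by (simp only: of_real_eq_iff)
qed

lemma cdft_cong: "(\<And>l. l < n \<Longrightarrow> x l = y l) \<Longrightarrow> cdft n x k = cdft n y k"
  unfolding cdft_def by (intro sum.cong refl) auto

locale fact_setup =
  fixes n1 n2 n3 r :: nat and X :: tensor3
  assumes n3: "0 < n3" and rk: "tubal_rank n1 n2 n3 X \<le> r"
begin

definition colv :: "nat \<Rightarrow> nat \<Rightarrow> cvec" where "colv k j = (\<lambda>i. fd n3 X i j k)"
definition G :: "nat \<Rightarrow> (cvec \<times> cvec) list" where "G k = gs n1 (map (colv k) [0..<n2]) []"
definition Qh :: "nat \<Rightarrow> nat \<Rightarrow> nat \<Rightarrow> complex" where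
  "Qh i a k = (if a < length (G k) then snd (G k ! a) i else 0)"
definition Wh :: "nat \<Rightarrow> nat \<Rightarrow> nat \<Rightarrow> complex" where
  "Wh a j k = (if a < length (G k) then inn n1 (colv k j) (snd (G k ! a)) else 0)"

lemma G_props: "Inv n1 (G k)" "\<And>j. j < n2 \<Longrightarrow> SP n1 (G k) (colv k j)"
  "set (map fst (G k)) \<subseteq> colv k ` {..<n2}"
proof -
  have "Inv n1 (G k) \<and> (\<forall>c\<in>{} \<union> set (map (colv k) [0..<n2]). SP n1 (G k) c) \<and> set (map fst (G k)) \<subseteq> set (map fst []) \<union> set (map (colv k) [0..<n2])"
    unfolding G_def using gs_inv[OF Inv_Nil, of "{}" n1 "map (colv k) [0..<n2]"] by simp
  then show "Inv n1 (G k)" "\<And>j. j < n2 \<Longrightarrow> SP n1 (G k) (colv k j)" "set (map fst (G k)) \<subseteq> colv k ` {..<n2}"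
    by auto
qed

lemma G_ON: "ON n1 (G k)" using G_props(1) unfolding Inv_def by auto

lemma G_sym:
  assumes k: "k < n3"
  shows "G ((n3 - k) mod n3) = map (map_prod cv cv) (G k)"
proof -
  have eq: "map (colv ((n3 - k) mod n3)) [0..<n2] = map cv (map (colv k) [0..<n2])"
    unfolding colv_def cv_def using fd_negidx[OF n3 k] by simp
  have "G ((n3 - k) mod n3) = gs n1 (map cv (map (colv k) [0..<n2])) (map (map_prod cv cv) [])"
    by (simp only: G_def eq list.map(1))
  also have "\<dots> = map (map_prod cv cv) (G k)" unfolding G_def by (rule gs_cv)
  finally show ?thesis .
qed

lemma Qh_sym: "k < n3 \<Longrightarrow> Qh i a ((n3 - k) mod n3) = cnj (Qh i a k)"
  unfolding Qh_def by (simp add: G_sym cv_def)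

lemma Wh_sym: "k < n3 \<Longrightarrow> Wh a j ((n3 - k) mod n3) = cnj (Wh a j k)"
proof -
  assume k: "k < n3"
  have "colv ((n3 - k) mod n3) j = cv (colv k j)" unfolding colv_def cv_def using fd_negidx[OF n3 k] by simp
  then show ?thesis unfolding Wh_def using k by (simp add: G_sym inn_cv)
qed

lemma G_len:
  assumes k: "k < n3"
  shows "length (G k) \<le> r"
proof -
  let ?A = "dft_slice n1 n2 n3 X k"
  let ?V = "(\<lambda>p. vec n1 (fst (G k ! p))) ` {..<length (G k)}"
  have card: "card ?V = length (G k)"
    using card_image[OF gs_inj[OF G_props(1)]] by simp
  have Acar: "?A \<in> carrier_mat n1 n2" unfolding dft_slice_def by simp
  have sub: "?V \<subseteq> set (cols ?A)"
  proof
    fix v assume "v \<in> ?V"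
    then obtain p where p: "p < length (G k)" "v = vec n1 (fst (G k ! p))" by auto
    have "fst (G k ! p) \<in> set (map fst (G k))" using p(1) by (auto intro!: image_eqI nth_mem)
    then obtain j where j: "j < n2" "fst (G k ! p) = colv k j" using G_props(3) by auto
    have "v = Matrix.col ?A j"
      unfolding p(2) j(2) dft_slice_def using j(1) by (intro eq_vecI) (simp_all add: colv_def fd_def cdft_def)
    then show "v \<in> set (cols ?A)" using j(1) Acar by (auto simp: cols_def)
  qed
  have "card ?V \<le> vec_space.rank n1 ?A"
    by (rule vec_space.rank_ge_card_indpt[OF Acar sub gs_lin_indpt[OF G_props(1)]])
  also have "\<dots> \<le> tubal_rank n1 n2 n3 X"
    unfolding tubal_rank_def using k by (intro Max_ge) auto
  finally show ?thesis using card rk by simp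
qed

end

definition tens :: "(nat \<times> nat \<times> nat \<Rightarrow> real) \<Rightarrow> tensor3" where
  "tens x = (\<lambda>i j k. x (i, j, k))"

context fact_setup
begin

definition Upar :: "nat \<times> nat \<times> nat \<Rightarrow> real" where
  "Upar = (\<lambda>(i, a, l). if i < n1 \<and> a < r \<and> l < n3 then Re (icdft n3 (Qh i a) l) else 0)"
definition Wpar :: "nat \<times> nat \<times> nat \<Rightarrow> real" where
  "Wpar = (\<lambda>(a, j, l). if a < r \<and> j < n2 \<and> l < n3 then Re (icdft n3 (Wh a j) l) else 0)"

lemma fd_U: "i < n1 \<Longrightarrow> a < r \<Longrightarrow> k < n3 \<Longrightarrow> fd n3 (tens Upar) i a k = Qh i a k"
proof -
  assume i: "i < n1" and a: "a < r" and k: "k < n3"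
  have "fd n3 (tens Upar) i a k = cdft n3 (\<lambda>l. complex_of_real (Re (icdft n3 (Qh i a) l))) k"
    unfolding fd_def tens_def Upar_def using i a by (intro cdft_cong) simp
  also have "\<dots> = Qh i a k" by (rule cdft_realify[of n3 "Qh i a" k, OF n3 Qh_sym k])
  finally show ?thesis .
qed

lemma fd_W: "a < r \<Longrightarrow> j < n2 \<Longrightarrow> k < n3 \<Longrightarrow> fd n3 (tens Wpar) a j k = Wh a j k"
proof -
  assume a: "a < r" and j: "j < n2" and k: "k < n3"
  have "fd n3 (tens Wpar) a j k = cdft n3 (\<lambda>l. complex_of_real (Re (icdft n3 (Wh a j) l))) k"
    unfolding fd_def tens_def Wpar_def using j a by (intro cdft_cong) simp
  also have "\<dots> = Wh a j k" by (rule cdft_realify[of n3 "Wh a j" k, OF n3 Wh_sym k])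
  finally show ?thesis .
qed

lemma sum_r_len:
  assumes k: "k < n3" and z: "\<And>a. length (G k) \<le> a \<Longrightarrow> f a = 0"
  shows "(\<Sum>a<r. f a) = (\<Sum>a<length (G k). f a)"
proof -
  have "length (G k) \<le> r" by (rule G_len[OF k])
  then show ?thesis by (intro sum.mono_neutral_right) (auto intro: z)
qed

lemma recon:
  assumes i: "i < n1" and j: "j < n2" and k: "k < n3"
  shows "(\<Sum>a<r. Qh i a k * Wh a j k) = fd n3 X i j k"
proof -
  have "(\<Sum>a<r. Qh i a k * Wh a j k) = (\<Sum>a<length (G k). Qh i a k * Wh a j k)"
    by (rule sum_r_len[OF k]) (simp add: Qh_def)
  also have "\<dots> = (\<Sum>a<length (G k). inn n1 (colv k j) (snd (G k ! a)) * snd (G k ! a) i)"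
    unfolding Qh_def Wh_def by (intro sum.cong refl) (simp add: mult.commute)
  also have "\<dots> = colv k j i" using G_props(2)[OF j] i unfolding SP_def by simp
  finally show ?thesis unfolding colv_def .
qed

lemma factor:
  assumes i: "i < n1" and j: "j < n2" and k: "k < n3"
  shows "tprod n3 r (tens Upar) (tens Wpar) i j k = X i j k"
proof -
  define D where "D = (\<lambda>i j l. tprod n3 r (tens Upar) (tens Wpar) i j l - X i j l)"
  have fdD: "fd n3 D i j k = 0" if "i < n1" "j < n2" "k < n3" for i j k
  proof -
    have "fd n3 D i j k = fd n3 (tprod n3 r (tens Upar) (tens Wpar)) i j k - fd n3 X i j k"
      unfolding fd_def D_def by (simp add: cdft_diff)
    also have "fd n3 (tprod n3 r (tens Upar) (tens Wpar)) i j k = (\<Sum>a<r. Qh i a k * Wh a j k)"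
      unfolding fd_tprod[OF n3] using that by (intro sum.cong refl) (simp add: fd_U fd_W)
    finally show ?thesis using recon[OF that] by simp
  qed
  have "real n3 * fsq n1 n2 n3 D = 0"
    unfolding parseval_tensor[OF n3, symmetric] by (simp add: fdD)
  then have "fsq n1 n2 n3 D = 0" using n3 by simp
  then have "(\<Sum>(i,j,k)\<in>box n1 n2 n3. (D i j k)\<^sup>2) = 0" unfolding fsq_def sum3_box .
  then have "\<forall>x\<in>box n1 n2 n3. (case x of (i,j,k) \<Rightarrow> (D i j k)\<^sup>2) = 0"
    by (subst sum_nonneg_eq_0_iff[symmetric]) (auto simp: box_def)
  then have "(D i j k)\<^sup>2 = 0" using i j k unfolding box_def by auto
  then show ?thesis unfolding D_def by simp
qed

lemma W_norm: "fsq r n2 n3 (tens Wpar) = fsq n1 n2 n3 X"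
proof -
  have "real n3 * fsq r n2 n3 (tens Wpar) = (\<Sum>a<r. \<Sum>j<n2. \<Sum>k<n3. (cmod (Wh a j k))\<^sup>2)"
    unfolding parseval_tensor[OF n3, symmetric] by (intro sum.cong refl) (simp add: fd_W)
  also have "\<dots> = (\<Sum>j<n2. \<Sum>k<n3. \<Sum>a<r. (cmod (Wh a j k))\<^sup>2)" by (rule sum_swap3)
  also have "\<dots> = (\<Sum>j<n2. \<Sum>k<n3. \<Sum>i<n1. (cmod (fd n3 X i j k))\<^sup>2)"
  proof (rule sum.cong[OF refl], rule sum.cong[OF refl])
    fix j k assume j: "j \<in> {..<n2}" and k: "k \<in> {..<n3}"
    have "(\<Sum>a<r. (cmod (Wh a j k))\<^sup>2) = (\<Sum>a<length (G k). (cmod (Wh a j k))\<^sup>2)"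
      using k by (intro sum_r_len) (auto simp: Wh_def)
    also have "\<dots> = (\<Sum>a<length (G k). (cmod (inn n1 (colv k j) (snd (G k ! a))))\<^sup>2)"
      unfolding Wh_def by simp
    also have "\<dots> = (\<Sum>i<n1. (cmod (colv k j i))\<^sup>2)"
      using j by (intro SP_parseval G_props(2) G_ON) auto
    finally show "(\<Sum>a<r. (cmod (Wh a j k))\<^sup>2) = (\<Sum>i<n1. (cmod (fd n3 X i j k))\<^sup>2)"
      unfolding colv_def .
  qed
  also have "\<dots> = (\<Sum>i<n1. \<Sum>j<n2. \<Sum>k<n3. (cmod (fd n3 X i j k))\<^sup>2)" by (rule sum_swap3[symmetric])
  also have "\<dots> = real n3 * fsq n1 n2 n3 X" by (rule parseval_tensor[OF n3])
  finally show ?thesis using n3 by simp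
qed

lemma U_contr: "fsq n1 n2 n3 (tprod n3 r (tens Upar) Z) \<le> fsq r n2 n3 Z"
proof -
  have "real n3 * fsq n1 n2 n3 (tprod n3 r (tens Upar) Z)
      = (\<Sum>i<n1. \<Sum>j<n2. \<Sum>k<n3. (cmod (\<Sum>a<r. Qh i a k * fd n3 Z a j k))\<^sup>2)"
    unfolding parseval_tensor[OF n3, symmetric] fd_tprod[OF n3]
    by (intro sum.cong refl) (simp add: fd_U)
  also have "\<dots> = (\<Sum>j<n2. \<Sum>k<n3. \<Sum>i<n1. (cmod (\<Sum>a<r. Qh i a k * fd n3 Z a j k))\<^sup>2)"
    by (rule sum_swap3)
  also have "\<dots> \<le> (\<Sum>j<n2. \<Sum>k<n3. \<Sum>a<r. (cmod (fd n3 Z a j k))\<^sup>2)"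
  proof (intro sum_mono)
    fix j k assume k: "k \<in> {..<n3}"
    have inner: "(\<Sum>a<r. Qh i a k * fd n3 Z a j k) = (\<Sum>a<length (G k). fd n3 Z a j k * snd (G k ! a) i)" for i
    proof -
      have "(\<Sum>a<r. Qh i a k * fd n3 Z a j k) = (\<Sum>a<length (G k). Qh i a k * fd n3 Z a j k)"
        using k by (intro sum_r_len) (auto simp: Qh_def)
      also have "\<dots> = (\<Sum>a<length (G k). fd n3 Z a j k * snd (G k ! a) i)"
        unfolding Qh_def by (intro sum.cong refl) (simp add: mult.commute)
      finally show ?thesis .
    qed
    have "(\<Sum>i<n1. (cmod (\<Sum>a<r. Qh i a k * fd n3 Z a j k))\<^sup>2)
        = (\<Sum>i<n1. (cmod (\<Sum>a<length (G k). fd n3 Z a j k * snd (G k ! a) i))\<^sup>2)"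
      by (simp only: inner)
    also have "\<dots> = (\<Sum>a<length (G k). (cmod (fd n3 Z a j k))\<^sup>2)" by (rule ON_norm[OF G_ON])
    also have "\<dots> \<le> (\<Sum>a<r. (cmod (fd n3 Z a j k))\<^sup>2)"
      using G_len k by (intro sum_mono2) auto
    finally show "(\<Sum>i<n1. (cmod (\<Sum>a<r. Qh i a k * fd n3 Z a j k))\<^sup>2) \<le> (\<Sum>a<r. (cmod (fd n3 Z a j k))\<^sup>2)" .
  qed
  also have "\<dots> = (\<Sum>a<r. \<Sum>j<n2. \<Sum>k<n3. (cmod (fd n3 Z a j k))\<^sup>2)" by (rule sum_swap3[symmetric])
  also have "\<dots> = real n3 * fsq r n2 n3 Z" by (rule parseval_tensor[OF n3])
  finally show ?thesis using n3 by simp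
qed

end

lemma frob_cong:
  "(\<And>i j k. i < n1 \<Longrightarrow> j < n2 \<Longrightarrow> k < n3 \<Longrightarrow> A i j k = B i j k) \<Longrightarrow> frob_norm n1 n2 n3 A = frob_norm n1 n2 n3 B"
  unfolding frob_norm_def by (intro arg_cong[where f=sqrt] sum.cong refl) auto

lemma frob_tri: "frob_norm n1 n2 n3 (\<lambda>i j k. A i j k + B i j k) \<le> frob_norm n1 n2 n3 A + frob_norm n1 n2 n3 B"
proof -
  have e: "(\<lambda>(i,j,k). A i j k + B i j k) = (\<lambda>q. (\<lambda>(i,j,k). A i j k) q + (\<lambda>(i,j,k). B i j k) q)" by auto
  show ?thesis unfolding frob_L2 e by (rule L2_set_triangle_ineq)
qed

lemma frob_scale: "frob_norm n1 n2 n3 (\<lambda>i j k. c * A i j k) = \<bar>c\<bar> * frob_norm n1 n2 n3 A"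
proof -
  have "fsq n1 n2 n3 (\<lambda>i j k. c * A i j k) = c\<^sup>2 * fsq n1 n2 n3 A"
    unfolding fsq_def by (simp add: sum_distrib_left power_mult_distrib)
  then show ?thesis unfolding frob_sqrt by (simp add: real_sqrt_mult)
qed

lemma frob_nonneg: "0 \<le> frob_norm n1 n2 n3 A"
  unfolding frob_sqrt fsq_def by (simp add: sum_nonneg)

lemma frob_dist_tri: "frob_dist n1 n2 n3 A C \<le> frob_dist n1 n2 n3 A B + frob_dist n1 n2 n3 B C"
  unfolding frob_dist_def using frob_tri[of n1 n2 n3 "\<lambda>i j k. A i j k - B i j k" "\<lambda>i j k. B i j k - C i j k"] by simp

lemma frob_dist_sym: "frob_dist n1 n2 n3 A B = frob_dist n1 n2 n3 B A"
  unfolding frob_dist_def frob_norm_def by (simp add: power2_commute)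

lemma entry_le_frob: "i < n1 \<Longrightarrow> j < n2 \<Longrightarrow> k < n3 \<Longrightarrow> \<bar>A i j k\<bar> \<le> frob_norm n1 n2 n3 A"
proof -
  assume "i < n1" "j < n2" "k < n3"
  then have "(i,j,k) \<in> box n1 n2 n3" unfolding box_def by simp
  then have "(\<lambda>(i,j,k). \<bar>A i j k\<bar>) (i,j,k) \<le> L2_set (\<lambda>(i,j,k). \<bar>A i j k\<bar>) (box n1 n2 n3)"
    by (intro member_le_L2_set) (auto simp: box_def)
  also have "L2_set (\<lambda>(i,j,k). \<bar>A i j k\<bar>) (box n1 n2 n3) = frob_norm n1 n2 n3 A"
    unfolding frob_L2 L2_set_def by (simp add: case_prod_beta)
  finally show ?thesis by simp
qed

lemma fsq_nonneg: "0 \<le> fsq n1 n2 n3 A" unfolding fsq_def by (simp add: sum_nonneg)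

lemma entry_sq_le_fsq: "i < n1 \<Longrightarrow> j < n2 \<Longrightarrow> k < n3 \<Longrightarrow> (A i j k)\<^sup>2 \<le> fsq n1 n2 n3 A"
proof -
  assume "i < n1" "j < n2" "k < n3"
  then have "(i,j,k) \<in> box n1 n2 n3" unfolding box_def by simp
  then have "(\<lambda>(i,j,k). (A i j k)\<^sup>2) (i,j,k) \<le> (\<Sum>(i,j,k)\<in>box n1 n2 n3. (A i j k)\<^sup>2)"
    by (intro member_le_sum) (auto simp: box_def)
  then show ?thesis unfolding fsq_def sum3_box by simp
qed

lemma tprod_add: "tprod n3 r (tens (\<lambda>q. x q + y q)) Z = (\<lambda>i j k. tprod n3 r (tens x) Z i j k + tprod n3 r (tens y) Z i j k)"
  unfolding tprod_def tens_def by (simp add: distrib_right sum.distrib)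

lemma tprod_scale: "tprod n3 r (tens (\<lambda>q. c * x q)) Z = (\<lambda>i j k. c * tprod n3 r (tens x) Z i j k)"
  unfolding tprod_def tens_def by (simp add: sum_distrib_left mult.assoc)

lemma tprod_scale2: "tprod n3 r A (\<lambda>a j m. c * Z a j m) = (\<lambda>i j k. c * tprod n3 r A Z i j k)"
  unfolding tprod_def by (simp add: sum_distrib_left mult_ac)

lemma tprod_cong2:
  assumes "0 < n3" "\<And>a j m. a < r \<Longrightarrow> j < n2 \<Longrightarrow> m < n3 \<Longrightarrow> Z a j m = Z' a j m" "j < n2"
  shows "tprod n3 r A Z i j k = tprod n3 r A Z' i j k"
  unfolding tprod_def using assms by (intro sum.cong refl) auto

definition Zs :: "nat \<Rightarrow> nat \<Rightarrow> nat \<Rightarrow> tensor3 set" where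
  "Zs r n2 n3 = {Z. fsq r n2 n3 Z \<le> 1}"

definition opn :: "nat \<Rightarrow> nat \<Rightarrow> nat \<Rightarrow> nat \<Rightarrow> (nat \<times> nat \<times> nat \<Rightarrow> real) \<Rightarrow> real" where
  "opn n1 n2 n3 r x = Sup ((\<lambda>Z. frob_norm n1 n2 n3 (tprod n3 r (tens x) Z)) ` Zs r n2 n3)"

lemma Zs_bound: "0 < n3 \<Longrightarrow> Z \<in> Zs r n2 n3 \<Longrightarrow> a < r \<Longrightarrow> j < n2 \<Longrightarrow> m < n3 \<Longrightarrow> \<bar>Z a j m\<bar> \<le> 1"
proof -
  assume "Z \<in> Zs r n2 n3" "a < r" "j < n2" "m < n3"
  then have "(Z a j m)\<^sup>2 \<le> 1" using entry_sq_le_fsq[of a r j n2 m n3 Z] unfolding Zs_def by simp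
  then show ?thesis by (simp add: abs_square_le_1)
qed

lemma opn_bdd:
  assumes n3: "0 < n3"
  shows "bdd_above ((\<lambda>Z. frob_norm n1 n2 n3 (tprod n3 r (tens x) Z)) ` Zs r n2 n3)"
proof (rule bdd_aboveI2)
  fix Z assume Z: "Z \<in> Zs r n2 n3"
  have "frob_norm n1 n2 n3 (tprod n3 r (tens x) Z) \<le> (\<Sum>(i,j,k)\<in>box n1 n2 n3. \<bar>tprod n3 r (tens x) Z i j k\<bar>)"
    unfolding frob_L2 by (rule order_trans[OF L2_set_le_sum_abs]) (simp add: split_def)
  also have "\<dots> \<le> (\<Sum>(i,j,k)\<in>box n1 n2 n3. \<Sum>a<r. \<Sum>l<n3. \<bar>x (i, a, l)\<bar>)"
  proof (rule sum_mono)
    fix q assume q: "q \<in> box n1 n2 n3"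
    obtain i j k where ijk: "q = (i,j,k)" by (cases q) auto
    have j: "j < n2" using q ijk by (simp add: box_def)
    have "\<bar>tprod n3 r (tens x) Z i j k\<bar> \<le> (\<Sum>a<r. \<Sum>l<n3. \<bar>x (i, a, l) * Z a j ((k + (n3 - l)) mod n3)\<bar>)"
      unfolding tprod_def tens_def by (rule order_trans[OF sum_abs sum_mono]) (rule sum_abs)
    also have "\<dots> \<le> (\<Sum>a<r. \<Sum>l<n3. \<bar>x (i, a, l)\<bar>)"
    proof (intro sum_mono)
      fix a l assume "a \<in> {..<r}" "l \<in> {..<n3}"
      then have "\<bar>Z a j ((k + (n3 - l)) mod n3)\<bar> \<le> 1" using Zs_bound[OF n3 Z _ j] n3 by simp
      then show "\<bar>x (i, a, l) * Z a j ((k + (n3 - l)) mod n3)\<bar> \<le> \<bar>x (i, a, l)\<bar>"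
        by (simp add: abs_mult mult_left_le)
    qed
    finally show "(\<lambda>(i,j,k). \<bar>tprod n3 r (tens x) Z i j k\<bar>) q \<le> (\<lambda>(i,j,k). \<Sum>a<r. \<Sum>l<n3. \<bar>x (i, a, l)\<bar>) q"
      using ijk by simp
  qed
  finally show "frob_norm n1 n2 n3 (tprod n3 r (tens x) Z) \<le> (\<Sum>(i,j,k)\<in>box n1 n2 n3. \<Sum>a<r. \<Sum>l<n3. \<bar>x (i, a, l)\<bar>)" .
qed

lemma Zs_ne: "(\<lambda>a j m. 0) \<in> Zs r n2 n3" unfolding Zs_def fsq_def by simp

lemma opn_upper: "0 < n3 \<Longrightarrow> Z \<in> Zs r n2 n3 \<Longrightarrow> frob_norm n1 n2 n3 (tprod n3 r (tens x) Z) \<le> opn n1 n2 n3 r x"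
  unfolding opn_def by (rule cSUP_upper[OF _ opn_bdd])

lemma opn_least: "(\<And>Z. Z \<in> Zs r n2 n3 \<Longrightarrow> frob_norm n1 n2 n3 (tprod n3 r (tens x) Z) \<le> c) \<Longrightarrow> opn n1 n2 n3 r x \<le> c"
  unfolding opn_def using Zs_ne[of r n2 n3] by (intro cSUP_least) auto

lemma opn_nonneg: "0 < n3 \<Longrightarrow> 0 \<le> opn n1 n2 n3 r x"
  by (rule order_trans[OF frob_nonneg opn_upper[OF _ Zs_ne]])

lemma cont_frob_tprod: "continuous_on UNIV (\<lambda>x. frob_norm n1 n2 n3 (tprod n3 r (tens x) Z))"
  unfolding frob_sqrt fsq_def tprod_def tens_def
  by (intro continuous_intros continuous_on_product_coordinates)

lemma cont_frob_tens: "continuous_on UNIV (\<lambda>x. frob_norm n1 n2 n3 (tens x))"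
  unfolding frob_sqrt fsq_def tens_def
  by (intro continuous_intros continuous_on_product_coordinates)

lemma modzero_iff: "l < n \<Longrightarrow> l0 < n \<Longrightarrow> ((l0 + (n - l)) mod n = 0) = (l = (l0::nat))"
proof (cases "l \<le> l0")
  case True
  assume a: "l < n" "l0 < n"
  have e: "l0 + (n - l) = (l0 - l) + n" using True a by simp
  have "(l0 + (n - l)) mod n = (l0 - l) mod n" by (simp only: e mod_add_self2)
  also have "\<dots> = l0 - l" using a by simp
  finally have "(l0 + (n - l)) mod n = l0 - l" .
  then show ?thesis using True by auto
next
  case False
  assume a: "l < n" "l0 < n"
  then have "(l0 + (n - l)) mod n = l0 + (n - l)" using False by simp
  then show ?thesis using False a by simp
qed

lemma opn_pnorm:
  assumes n2: "0 < n2" and n3: "0 < n3"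
  shows "pnorm (opn n1 n2 n3 r) (box n1 r n3) 1"
proof
  show "finite (box n1 r n3)" unfolding box_def by simp
next
  fix x y :: "nat \<times> nat \<times> nat \<Rightarrow> real"
  show "opn n1 n2 n3 r (\<lambda>i. x i + y i) \<le> opn n1 n2 n3 r x + opn n1 n2 n3 r y"
  proof (rule opn_least)
    fix Z assume Z: "Z \<in> Zs r n2 n3"
    have "frob_norm n1 n2 n3 (tprod n3 r (tens (\<lambda>i. x i + y i)) Z)
        \<le> frob_norm n1 n2 n3 (tprod n3 r (tens x) Z) + frob_norm n1 n2 n3 (tprod n3 r (tens y) Z)"
      unfolding tprod_add by (rule frob_tri)
    also have "\<dots> \<le> opn n1 n2 n3 r x + opn n1 n2 n3 r y"
      by (intro add_mono opn_upper[OF n3 Z])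
    finally show "frob_norm n1 n2 n3 (tprod n3 r (tens (\<lambda>i. x i + y i)) Z) \<le> opn n1 n2 n3 r x + opn n1 n2 n3 r y" .
  qed
next
  have le: "opn n1 n2 n3 r (\<lambda>i. c * x i) \<le> \<bar>c\<bar> * opn n1 n2 n3 r x" for c x
  proof (rule opn_least)
    fix Z assume Z: "Z \<in> Zs r n2 n3"
    show "frob_norm n1 n2 n3 (tprod n3 r (tens (\<lambda>i. c * x i)) Z) \<le> \<bar>c\<bar> * opn n1 n2 n3 r x"
      unfolding tprod_scale frob_scale by (intro mult_left_mono opn_upper[OF n3 Z]) simp
  qed
  fix c :: real and x :: "nat \<times> nat \<times> nat \<Rightarrow> real"
  show "opn n1 n2 n3 r (\<lambda>i. c * x i) = \<bar>c\<bar> * opn n1 n2 n3 r x"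
  proof (cases "c = 0")
    case True
    then show ?thesis using le[of 0 x] opn_nonneg[OF n3, of n1 n2 r "\<lambda>i. 0 * x i"] by simp
  next
    case False
    have "opn n1 n2 n3 r x = opn n1 n2 n3 r (\<lambda>i. (1 / c) * (c * x i))" using False by simp
    also have "\<dots> \<le> \<bar>1 / c\<bar> * opn n1 n2 n3 r (\<lambda>i. c * x i)" by (rule le)
    finally have "\<bar>c\<bar> * opn n1 n2 n3 r x \<le> opn n1 n2 n3 r (\<lambda>i. c * x i)"
      using False by (simp add: field_simps abs_divide)
    then show ?thesis using le[of c x] by simp
  qed
next
  fix x :: "nat \<times> nat \<times> nat \<Rightarrow> real" and q assume q: "q \<in> box n1 r n3"
  obtain i0 a0 l0 where q': "q = (i0, a0, l0)" "i0 < n1" "a0 < r" "l0 < n3" using q unfolding box_def by auto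
  define Z0 :: tensor3 where "Z0 = (\<lambda>a j m. if a = a0 \<and> j = 0 \<and> m = 0 then (1::real) else 0)"
  have "fsq r n2 n3 Z0 = 1"
  proof -
    have "fsq r n2 n3 Z0 = (\<Sum>(a,j,m)\<in>box r n2 n3. (Z0 a j m)\<^sup>2)" unfolding fsq_def sum3_box ..
    also have "\<dots> = (\<Sum>q\<in>box r n2 n3. if q = (a0, 0, 0) then 1 else 0)"
      unfolding Z0_def by (intro sum.cong refl) (auto split: if_splits)
    also have "\<dots> = 1" using q' n2 n3 by (simp add: box_def)
    finally show ?thesis .
  qed
  then have Z0: "Z0 \<in> Zs r n2 n3" unfolding Zs_def by simp
  have "tprod n3 r (tens x) Z0 i0 0 l0 = (\<Sum>a<r. \<Sum>l<n3. if (a, l) = (a0, l0) then x (i0, a0, l0) else 0)"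
    unfolding tprod_def tens_def Z0_def
  proof (rule sum.cong[OF refl], rule sum.cong[OF refl])
    fix a l assume "a \<in> {..<r}" "l \<in> {..<n3}"
    then show "x (i0, a, l) * (if a = a0 \<and> 0 = (0::nat) \<and> (l0 + (n3 - l)) mod n3 = 0 then 1 else 0)
        = (if (a, l) = (a0, l0) then x (i0, a0, l0) else 0)"
      using modzero_iff[of l n3 l0] q'(4) by auto
  qed
  also have "\<dots> = (\<Sum>a<r. if a = a0 then x (i0, a0, l0) else 0)"
  proof (rule sum.cong[OF refl])
    fix a show "(\<Sum>l<n3. if (a, l) = (a0, l0) then x (i0, a0, l0) else 0) = (if a = a0 then x (i0, a0, l0) else 0)"
      using q'(4) by (cases "a = a0") simp_all
  qed
  also have "\<dots> = x (i0, a0, l0)" using q' by simp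
  finally have "\<bar>x q\<bar> = \<bar>tprod n3 r (tens x) Z0 i0 0 l0\<bar>" using q' by simp
  also have "\<dots> \<le> frob_norm n1 n2 n3 (tprod n3 r (tens x) Z0)" using q' n2 by (intro entry_le_frob) auto
  also have "\<dots> \<le> opn n1 n2 n3 r x" by (rule opn_upper[OF n3 Z0])
  finally show "\<bar>x q\<bar> \<le> 1 * opn n1 n2 n3 r x" by simp
next
  have "{x. opn n1 n2 n3 r x \<le> 1} = (\<Inter>Z\<in>Zs r n2 n3. {x. frob_norm n1 n2 n3 (tprod n3 r (tens x) Z) \<le> 1})"
  proof (rule equalityI; rule subsetI)
    fix x assume "x \<in> {x. opn n1 n2 n3 r x \<le> 1}"
    then show "x \<in> (\<Inter>Z\<in>Zs r n2 n3. {x. frob_norm n1 n2 n3 (tprod n3 r (tens x) Z) \<le> 1})"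
      using opn_upper[OF n3, of _ r n2 n1 x] by (auto intro: order_trans)
  next
    fix x assume "x \<in> (\<Inter>Z\<in>Zs r n2 n3. {x. frob_norm n1 n2 n3 (tprod n3 r (tens x) Z) \<le> 1})"
    then show "x \<in> {x. opn n1 n2 n3 r x \<le> 1}" by (auto intro: opn_least)
  qed
  also have "closed \<dots>"
    by (intro closed_INT ballI closed_Collect_le cont_frob_tprod continuous_on_const)
  finally show "closed {x. opn n1 n2 n3 r x \<le> 1}" .
qed

lemma opn_bound:
  assumes n3: "0 < n3"
  shows "frob_norm n1 n2 n3 (tprod n3 r (tens x) Z) \<le> opn n1 n2 n3 r x * frob_norm r n2 n3 Z"
proof (cases "frob_norm r n2 n3 Z = 0")
  case True
  then have f0: "fsq r n2 n3 Z = 0" unfolding frob_sqrt by simp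
  have "Z a j m = 0" if "a < r" "j < n2" "m < n3" for a j m
    using entry_sq_le_fsq[OF that, of Z] f0 by simp
  then have "frob_norm n1 n2 n3 (tprod n3 r (tens x) Z) = frob_norm n1 n2 n3 (tprod n3 r (tens x) (\<lambda>a j m. 0))"
    by (intro frob_cong tprod_cong2[OF n3]) auto
  also have "\<dots> = 0" unfolding tprod_def frob_norm_def by simp
  finally show ?thesis using True by simp
next
  case False
  let ?s = "frob_norm r n2 n3 Z"
  have s0: "0 < ?s" using False frob_nonneg[of r n2 n3 Z] by simp
  let ?Z = "\<lambda>a j m. (1 / ?s) * Z a j m"
  have "fsq r n2 n3 ?Z = fsq r n2 n3 Z / ?s\<^sup>2"
    unfolding fsq_def by (simp add: sum_divide_distrib power_divide)
  also have "?s\<^sup>2 = fsq r n2 n3 Z" unfolding frob_sqrt using fsq_nonneg by simp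
  finally have "fsq r n2 n3 ?Z \<le> 1" using s0 by simp
  then have "frob_norm n1 n2 n3 (tprod n3 r (tens x) ?Z) \<le> opn n1 n2 n3 r x"
    by (intro opn_upper[OF n3]) (simp add: Zs_def)
  then have "(1 / ?s) * frob_norm n1 n2 n3 (tprod n3 r (tens x) Z) \<le> opn n1 n2 n3 r x"
    unfolding tprod_scale2 frob_scale using s0 by simp
  then show ?thesis using s0 by (simp add: field_simps)
qed

definition pw :: "nat \<Rightarrow> nat \<Rightarrow> nat \<Rightarrow> (nat \<times> nat \<times> nat \<Rightarrow> real) \<Rightarrow> real" where
  "pw r n2 n3 w = frob_norm r n2 n3 (tens w)"

lemma pw_pnorm: "pnorm (pw r n2 n3) (box r n2 n3) 1"
proof
  show "finite (box r n2 n3)" unfolding box_def by simp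
next
  fix x y :: "nat \<times> nat \<times> nat \<Rightarrow> real"
  show "pw r n2 n3 (\<lambda>i. x i + y i) \<le> pw r n2 n3 x + pw r n2 n3 y"
    unfolding pw_def tens_def by (rule frob_tri)
next
  fix c :: real and x :: "nat \<times> nat \<times> nat \<Rightarrow> real"
  show "pw r n2 n3 (\<lambda>i. c * x i) = \<bar>c\<bar> * pw r n2 n3 x"
    unfolding pw_def tens_def by (rule frob_scale)
next
  fix x :: "nat \<times> nat \<times> nat \<Rightarrow> real" and q assume q: "q \<in> box r n2 n3"
  obtain a j l where q': "q = (a, j, l)" "a < r" "j < n2" "l < n3" using q unfolding box_def by auto
  show "\<bar>x q\<bar> \<le> 1 * pw r n2 n3 x"
    unfolding pw_def using entry_le_frob[OF q'(2-4), of "tens x"] q'(1) by (simp add: tens_def)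
next
  show "closed {x. pw r n2 n3 x \<le> 1}"
    unfolding pw_def by (intro closed_Collect_le cont_frob_tens continuous_on_const)
qed

lemma tprod_split:
  "tprod n3 r A B i j k - tprod n3 r A' B' i j k
   = tprod n3 r (\<lambda>i a l. A i a l - A' i a l) B i j k + tprod n3 r A' (\<lambda>a j m. B a j m - B' a j m) i j k"
  unfolding tprod_def by (simp add: sum_subtractf[symmetric] sum.distrib[symmetric] algebra_simps)

lemma card_box: "card (box a b c) = a * b * c"
  unfolding box_def by (simp add: card_cartesian_product)

theorem lemma2:
  fixes n1 n2 n3 r :: nat and \<epsilon> :: real
  assumes "0 < n1" and "0 < n2" and "0 < n3" and "0 < r"
    and "r \<le> min n1 n2"
    and "0 < \<epsilon>" and "\<epsilon> < 1"
  shows "covering_number (frob_dist n1 n2 n3) (low_tubal_sphere n1 n2 n3 r) \<epsilon>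
           \<le> ereal ((9 / \<epsilon>) ^ (r * r * n3 + n1 * r * n3 + n2 * r * n3))"
proof -
  note n2 = \<open>0 < n2\<close> and n3 = \<open>0 < n3\<close> and ep = \<open>0 < \<epsilon>\<close> \<open>\<epsilon> < 1\<close>
  let ?S = "low_tubal_sphere n1 n2 n3 r"
  define \<delta> where "\<delta> = \<epsilon> / 4"
  have dpos: "0 < \<delta>" unfolding \<delta>_def using ep by simp
  interpret PU: pnorm "opn n1 n2 n3 r" "box n1 r n3" 1 by (rule opn_pnorm[OF n2 n3])
  interpret PW: pnorm "pw r n2 n3" "box r n2 n3" 1 by (rule pw_pnorm)
  define SU where "SU = {x. (\<forall>j. j \<notin> box n1 r n3 \<longrightarrow> x j = 0) \<and> opn n1 n2 n3 r x \<le> 1}"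
  define SW where "SW = {x. (\<forall>j. j \<notin> box r n2 n3 \<longrightarrow> x j = 0) \<and> pw r n2 n3 x \<le> 1}"
  obtain NU where NU: "finite NU" "NU \<subseteq> SU" "real (card NU) \<le> (1 + 2 / \<delta>) ^ card (box n1 r n3)"
    "\<And>x. x \<in> SU \<Longrightarrow> \<exists>y\<in>NU. opn n1 n2 n3 r (\<lambda>i. x i - y i) \<le> \<delta>"
    using PU.covering[OF dpos, of SU] unfolding SU_def by blast
  obtain NW where NW: "finite NW" "NW \<subseteq> SW" "real (card NW) \<le> (1 + 2 / \<delta>) ^ card (box r n2 n3)"
    "\<And>x. x \<in> SW \<Longrightarrow> \<exists>y\<in>NW. pw r n2 n3 (\<lambda>i. x i - y i) \<le> \<delta>"
    using PW.covering[OF dpos, of SW] unfolding SW_def by blast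
  let ?T = "\<lambda>u w. tprod n3 r (tens u) (tens w)"
  have approx: "\<exists>u\<in>NU. \<exists>w\<in>NW. frob_dist n1 n2 n3 X (?T u w) \<le> \<epsilon> / 2" if X: "X \<in> ?S" for X
  proof -
    have rk: "tubal_rank n1 n2 n3 X \<le> r" and fn: "frob_norm n1 n2 n3 X = 1"
      using X unfolding low_tubal_sphere_def by auto
    interpret F: fact_setup n1 n2 n3 r X by unfold_locales (fact n3, fact rk)
    have fsqX: "fsq n1 n2 n3 X = 1" using fn unfolding frob_sqrt by simp
    have USU: "F.Upar \<in> SU"
      unfolding SU_def
    proof (intro CollectI conjI allI impI)
      fix q assume "q \<notin> box n1 r n3"
      then show "F.Upar q = 0" unfolding F.Upar_def box_def by (cases q) auto
    next
      show "opn n1 n2 n3 r F.Upar \<le> 1"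
      proof (rule opn_least)
        fix Z assume "Z \<in> Zs r n2 n3"
        then have "fsq r n2 n3 Z \<le> 1" unfolding Zs_def by simp
        then have "fsq n1 n2 n3 (tprod n3 r (tens F.Upar) Z) \<le> 1" using F.U_contr[of Z] by simp
        then show "frob_norm n1 n2 n3 (tprod n3 r (tens F.Upar) Z) \<le> 1" unfolding frob_sqrt by simp
      qed
    qed
    have fW: "frob_norm r n2 n3 (tens F.Wpar) = 1" unfolding frob_sqrt F.W_norm fsqX by simp
    have WSW: "F.Wpar \<in> SW"
      unfolding SW_def
    proof (intro CollectI conjI allI impI)
      fix q assume "q \<notin> box r n2 n3"
      then show "F.Wpar q = 0" unfolding F.Wpar_def box_def by (cases q) auto
    next
      show "pw r n2 n3 F.Wpar \<le> 1" unfolding pw_def fW by simp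
    qed
    obtain u where u: "u \<in> NU" "opn n1 n2 n3 r (\<lambda>i. F.Upar i - u i) \<le> \<delta>" using NU(4)[OF USU] by blast
    obtain w where w: "w \<in> NW" "pw r n2 n3 (\<lambda>i. F.Wpar i - w i) \<le> \<delta>" using NW(4)[OF WSW] by blast
    have u1: "opn n1 n2 n3 r u \<le> 1" using u(1) NU(2) unfolding SU_def by auto
    have "frob_dist n1 n2 n3 X (?T u w) = frob_norm n1 n2 n3 (\<lambda>i j k. ?T F.Upar F.Wpar i j k - ?T u w i j k)"
      unfolding frob_dist_def by (intro frob_cong) (simp add: F.factor)
    also have "\<dots> = frob_norm n1 n2 n3 (\<lambda>i j k. tprod n3 r (tens (\<lambda>q. F.Upar q - u q)) (tens F.Wpar) i j k
                   + tprod n3 r (tens u) (\<lambda>a j m. tens F.Wpar a j m - tens w a j m) i j k)"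
      unfolding tprod_split by (simp add: tens_def)
    also have "\<dots> \<le> frob_norm n1 n2 n3 (tprod n3 r (tens (\<lambda>q. F.Upar q - u q)) (tens F.Wpar))
                   + frob_norm n1 n2 n3 (tprod n3 r (tens u) (\<lambda>a j m. tens F.Wpar a j m - tens w a j m))"
      by (rule frob_tri)
    also have "\<dots> \<le> opn n1 n2 n3 r (\<lambda>q. F.Upar q - u q) * frob_norm r n2 n3 (tens F.Wpar)
                   + opn n1 n2 n3 r u * frob_norm r n2 n3 (\<lambda>a j m. tens F.Wpar a j m - tens w a j m)"
      by (intro add_mono opn_bound[OF n3])
    also have "\<dots> \<le> \<delta> * 1 + 1 * \<delta>"
    proof (intro add_mono mult_mono)
      show "opn n1 n2 n3 r (\<lambda>q. F.Upar q - u q) \<le> \<delta>" by (rule u(2))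
      show "frob_norm r n2 n3 (tens F.Wpar) \<le> 1" using fW by simp
      show "opn n1 n2 n3 r u \<le> 1" by (rule u1)
      show "frob_norm r n2 n3 (\<lambda>a j m. tens F.Wpar a j m - tens w a j m) \<le> \<delta>"
        using w(2) unfolding pw_def by (simp add: tens_def)
    qed (auto simp: frob_nonneg opn_nonneg[OF n3] dpos less_imp_le)
    also have "\<dots> = \<epsilon> / 2" unfolding \<delta>_def by simp
    finally show ?thesis using u(1) w(1) by blast
  qed
  define D where "D = {uw \<in> NU \<times> NW. \<exists>X'\<in>?S. frob_dist n1 n2 n3 X' (?T (fst uw) (snd uw)) \<le> \<epsilon> / 2}"
  define g where "g uw = (SOME X'. X' \<in> ?S \<and> frob_dist n1 n2 n3 X' (?T (fst uw) (snd uw)) \<le> \<epsilon> / 2)" for uw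
  have g: "g uw \<in> ?S \<and> frob_dist n1 n2 n3 (g uw) (?T (fst uw) (snd uw)) \<le> \<epsilon> / 2" if "uw \<in> D" for uw
  proof -
    from that obtain X' where "X' \<in> ?S \<and> frob_dist n1 n2 n3 X' (?T (fst uw) (snd uw)) \<le> \<epsilon> / 2"
      unfolding D_def by blast
    then show ?thesis unfolding g_def
      by (rule someI[of "\<lambda>X'. X' \<in> ?S \<and> frob_dist n1 n2 n3 X' (?T (fst uw) (snd uw)) \<le> \<epsilon> / 2"])
  qed
  define N where "N = g ` D"
  have Dsub: "D \<subseteq> NU \<times> NW" unfolding D_def by blast
  have Dfin: "finite D" using NU(1) NW(1) Dsub by (meson finite_SigmaI finite_subset)
  have Nfin: "finite N" unfolding N_def using Dfin by simp
  have net: "eps_net (frob_dist n1 n2 n3) ?S \<epsilon> N"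
    unfolding eps_net_def
  proof (intro conjI ballI)
    show "N \<subseteq> ?S" unfolding N_def using g by auto
  next
    fix X assume X: "X \<in> ?S"
    obtain u w where uw: "u \<in> NU" "w \<in> NW" "frob_dist n1 n2 n3 X (?T u w) \<le> \<epsilon> / 2" using approx[OF X] by blast
    have D: "(u, w) \<in> D" unfolding D_def using uw X by auto
    have "frob_dist n1 n2 n3 X (g (u, w)) \<le> frob_dist n1 n2 n3 X (?T u w) + frob_dist n1 n2 n3 (?T u w) (g (u, w))"
      by (rule frob_dist_tri)
    also have "\<dots> \<le> \<epsilon> / 2 + \<epsilon> / 2" using uw(3) g[OF D] frob_dist_sym by (intro add_mono) auto
    finally show "\<exists>y\<in>N. frob_dist n1 n2 n3 X y \<le> \<epsilon>" using D unfolding N_def by auto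
  qed
  have "covering_number (frob_dist n1 n2 n3) ?S \<epsilon> \<le> ereal (real (card N))"
    unfolding covering_number_def using Nfin net by (intro INF_lower) simp
  also have "real (card N) \<le> real (card NU * card NW)"
  proof -
    have "card N \<le> card D" unfolding N_def using Dfin by (rule card_image_le)
    also have "card D \<le> card (NU \<times> NW)" using NU(1) NW(1) Dsub by (intro card_mono) auto
    finally have "card N \<le> card NU * card NW" by (simp add: card_cartesian_product)
    then show ?thesis by (simp only: of_nat_le_iff)
  qed
  also have "real (card NU * card NW) \<le> (1 + 2 / \<delta>) ^ (n1 * r * n3) * (1 + 2 / \<delta>) ^ (r * n2 * n3)"
    unfolding of_nat_mult using NU(3) NW(3) unfolding card_box by (intro mult_mono) auto
  also have "\<dots> = (1 + 2 / \<delta>) ^ (n1 * r * n3 + r * n2 * n3)" by (simp add: power_add)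
  also have "\<dots> \<le> (9 / \<epsilon>) ^ (n1 * r * n3 + r * n2 * n3)"
  proof (rule power_mono)
    show "1 + 2 / \<delta> \<le> 9 / \<epsilon>" unfolding \<delta>_def using ep by (simp add: field_simps)
    show "0 \<le> 1 + 2 / \<delta>" using dpos by simp
  qed
  also have "\<dots> \<le> (9 / \<epsilon>) ^ (r * r * n3 + n1 * r * n3 + n2 * r * n3)"
    by (rule power_increasing) (use ep in \<open>simp_all add: field_simps\<close>)
  finally show ?thesis by simp
qed

end
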